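(* \[m_{\mathbb{H}}(x^2-y^2)=0.\]
   Context: $\mathbb{H}$ denotes the quaternions, $\mathbb{T}^2(\mathbb{H})=\{(x,y)\in\mathbb{H}^2:|x|=|y|=1\}$ with probability Haar measure $\mu$, and $m_{\mathbb{H}}(P)=\int_{\mathbb{T}^2(\mathbb{H})}\log|P(x,y)|\,d\mu$. *)

theory Defs
  imports "HOL-Analysis.Analysis" "HOL-Probability.Probability"
begin

text \<open>Quaternions a + b i + c j + d k are represented as the real 4-tuple (a,b,c,d);
  the product-type norm is the Euclidean norm, i.e. the quaternion absolute value.\<close>

type_synonym quat = "real \<times> real \<times> real \<times> real"

fun qmult :: "quat \<Rightarrow> quat \<Rightarrow> quat" where
  "qmult (a1, b1, c1, d1) (a2, b2, c2, d2) =
     (a1*a2 - b1*b2 - c1*c2 - d1*d2,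
      a1*b2 + b1*a2 + c1*d2 - d1*c2,
      a1*c2 - b1*d2 + c1*a2 + d1*b2,
      a1*d2 + b1*c2 - c1*b2 + d1*a2)"

definition qtorus2 :: "(quat \<times> quat) set" where
  "qtorus2 = {(x, y). norm x = 1 \<and> norm y = 1}"

definition is_haar_qtorus2 :: "(quat \<times> quat) measure \<Rightarrow> bool" where
  "is_haar_qtorus2 \<mu> \<longleftrightarrow>
     prob_space \<mu> \<and> space \<mu> = qtorus2 \<and>
     sets \<mu> = sets (restrict_space borel qtorus2) \<and>
     (\<forall>a b. (a, b) \<in> qtorus2 \<longrightarrow>
        distr \<mu> \<mu> (\<lambda>(x, y). (qmult a x, qmult b y)) = \<mu>)"

definition mahler_H :: "(quat \<times> quat) measure \<Rightarrow> (quat \<Rightarrow> quat \<Rightarrow> quat) \<Rightarrow> real" where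
  "mahler_H \<mu> P = (\<integral>z. ln (norm (P (fst z) (snd z))) \<partial>\<mu>)"

end

theory Submission
  imports Defs
begin

definition q0 :: "quat \<Rightarrow> real" where "q0 x = fst x"
definition q1 :: "quat \<Rightarrow> real" where "q1 x = fst (snd x)"
definition q2 :: "quat \<Rightarrow> real" where "q2 x = fst (snd (snd x))"
definition q3 :: "quat \<Rightarrow> real" where "q3 x = snd (snd (snd x))"

lemma q_simps[simp]: "q0 (a,b,c,d) = a" "q1 (a,b,c,d) = b" "q2 (a,b,c,d) = c" "q3 (a,b,c,d) = d"
  by (simp_all add: q0_def q1_def q2_def q3_def)

lemma quat_eq: "x = (q0 x, q1 x, q2 x, q3 x)"
  by (simp add: q0_def q1_def q2_def q3_def)

lemma quat_cases: obtains a b c d where "x = (a,b,c,d)"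
  by (metis prod.collapse)

lemma qmult_comp: "qmult x y =
     (q0 x*q0 y - q1 x*q1 y - q2 x*q2 y - q3 x*q3 y,
      q0 x*q1 y + q1 x*q0 y + q2 x*q3 y - q3 x*q2 y,
      q0 x*q2 y - q1 x*q3 y + q2 x*q0 y + q3 x*q1 y,
      q0 x*q3 y + q1 x*q2 y - q2 x*q1 y + q3 x*q0 y)"
  by (cases x rule: quat_cases; cases y rule: quat_cases) simp

lemma inner_quat: "inner x y = q0 x * q0 y + q1 x * q1 y + q2 x * q2 y + q3 x * q3 y"
  by (cases x rule: quat_cases; cases y rule: quat_cases) (simp add: inner_Pair)

lemma norm_quat: "norm x = sqrt ((q0 x)^2 + (q1 x)^2 + (q2 x)^2 + (q3 x)^2)"
  by (cases x rule: quat_cases) (simp add: norm_Pair)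

lemma norm_quat_sq: "(norm x)^2 = (q0 x)^2 + (q1 x)^2 + (q2 x)^2 + (q3 x)^2"
  by (simp add: norm_quat)

lemma q_comp_qmult[simp]:
  "q0 (qmult x y) = q0 x*q0 y - q1 x*q1 y - q2 x*q2 y - q3 x*q3 y"
  "q1 (qmult x y) = q0 x*q1 y + q1 x*q0 y + q2 x*q3 y - q3 x*q2 y"
  "q2 (qmult x y) = q0 x*q2 y - q1 x*q3 y + q2 x*q0 y + q3 x*q1 y"
  "q3 (qmult x y) = q0 x*q3 y + q1 x*q2 y - q2 x*q1 y + q3 x*q0 y"
  by (subst qmult_comp; simp)+

lemma q_comp_add[simp]: "q0 (x+y) = q0 x + q0 y" "q1 (x+y) = q1 x + q1 y"
  "q2 (x+y) = q2 x + q2 y" "q3 (x+y) = q3 x + q3 y"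
  by (simp_all add: q0_def q1_def q2_def q3_def)
lemma q_comp_diff[simp]: "q0 (x-y) = q0 x - q0 y" "q1 (x-y) = q1 x - q1 y"
  "q2 (x-y) = q2 x - q2 y" "q3 (x-y) = q3 x - q3 y"
  by (simp_all add: q0_def q1_def q2_def q3_def)
lemma q_comp_uminus[simp]: "q0 (-x) = - q0 x" "q1 (-x) = - q1 x"
  "q2 (-x) = - q2 x" "q3 (-x) = - q3 x"
  by (simp_all add: q0_def q1_def q2_def q3_def)
lemma q_comp_scaleR[simp]: "q0 (r *\<^sub>R x) = r * q0 x" "q1 (r *\<^sub>R x) = r * q1 x"
  "q2 (r *\<^sub>R x) = r * q2 x" "q3 (r *\<^sub>R x) = r * q3 x"
  by (simp_all add: q0_def q1_def q2_def q3_def)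

lemma quat_eqI: "q0 x = q0 y \<Longrightarrow> q1 x = q1 y \<Longrightarrow> q2 x = q2 y \<Longrightarrow> q3 x = q3 y \<Longrightarrow> x = y"
  by (metis quat_eq)

definition qc :: "quat \<Rightarrow> quat" where "qc x = (q0 x, - q1 x, - q2 x, - q3 x)"
definition qone :: quat where "qone = (1,0,0,0)"

lemma qc_simps[simp]: "q0 (qc x) = q0 x" "q1 (qc x) = - q1 x" "q2 (qc x) = - q2 x" "q3 (qc x) = - q3 x"
  by (simp_all add: qc_def)
lemma qone_simps[simp]: "q0 qone = 1" "q1 qone = 0" "q2 qone = 0" "q3 qone = 0"
  by (simp_all add: qone_def)

lemma qmult_assoc: "qmult (qmult x y) z = qmult x (qmult y z)"
  by (rule quat_eqI) (simp_all add: algebra_simps)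
lemma qmult_one[simp]: "qmult qone x = x" "qmult x qone = x"
  by (rule quat_eqI; simp)+
lemma qc_qc[simp]: "qc (qc x) = x" by (rule quat_eqI; simp)
lemma qc_qmult: "qc (qmult x y) = qmult (qc y) (qc x)"
  by (rule quat_eqI) (simp_all add: algebra_simps)

lemma inner_qmult_left: "inner (qmult a x) (qmult a y) = (norm a)^2 * inner x y"
  unfolding inner_quat norm_quat_sq by (simp add: algebra_simps power2_eq_square)
lemma inner_qmult_right: "inner (qmult x a) (qmult y a) = (norm a)^2 * inner x y"
  unfolding inner_quat norm_quat_sq by (simp add: algebra_simps power2_eq_square)

lemma norm_qmult_sq: "(norm (qmult x y))^2 = (norm x)^2 * (norm y)^2"
  unfolding norm_quat_sq by (simp add: algebra_simps power2_eq_square)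

lemma norm_qmult: "norm (qmult x y) = norm x * norm y"
proof -
  have "(norm (qmult x y))^2 = (norm x * norm y)^2"
    by (simp add: norm_qmult_sq power_mult_distrib)
  then show ?thesis by (simp add: power2_eq_iff_nonneg)
qed

lemma qmult_qc: "qmult x (qc x) = ((norm x)^2, 0, 0, 0)" "qmult (qc x) x = ((norm x)^2, 0, 0, 0)"
  unfolding norm_quat_sq by (rule quat_eqI; simp add: algebra_simps power2_eq_square)+

lemma norm_qc[simp]: "norm (qc x) = norm x"
  by (simp add: norm_quat)

definition S3 :: "quat set" where "S3 = {x. norm x = 1}"

lemma qmult_qc_S3: "x \<in> S3 \<Longrightarrow> qmult x (qc x) = qone" "x \<in> S3 \<Longrightarrow> qmult (qc x) x = qone"
  by (simp_all add: qmult_qc S3_def qone_def)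

lemma S3_qmult: "x \<in> S3 \<Longrightarrow> y \<in> S3 \<Longrightarrow> qmult x y \<in> S3"
  by (simp add: S3_def norm_qmult)
lemma S3_qc: "x \<in> S3 \<Longrightarrow> qc x \<in> S3" by (simp add: S3_def)
lemma S3_qone: "qone \<in> S3" by (simp add: S3_def qone_def norm_Pair)

lemma continuous_q[continuous_intros]:
  "continuous_on S f \<Longrightarrow> continuous_on S (\<lambda>x. q0 (f x))"
  "continuous_on S f \<Longrightarrow> continuous_on S (\<lambda>x. q1 (f x))"
  "continuous_on S f \<Longrightarrow> continuous_on S (\<lambda>x. q2 (f x))"
  "continuous_on S f \<Longrightarrow> continuous_on S (\<lambda>x. q3 (f x))"
  unfolding q0_def q1_def q2_def q3_def by (auto intro!: continuous_intros)

lemma continuous_qmult[continuous_intros]: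
  "continuous_on S f \<Longrightarrow> continuous_on S g \<Longrightarrow> continuous_on S (\<lambda>x. qmult (f x) (g x))"
  unfolding qmult_comp by (intro continuous_intros continuous_on_Pair) auto

lemma continuous_qc[continuous_intros]:
  "continuous_on S f \<Longrightarrow> continuous_on S (\<lambda>x. qc (f x))"
  unfolding qc_def by (intro continuous_intros continuous_on_Pair) auto

lemma continuous_q_id: "continuous_on UNIV q0" "continuous_on UNIV q1" "continuous_on UNIV q2" "continuous_on UNIV q3"
  unfolding q0_def q1_def q2_def q3_def by (auto intro!: continuous_intros)

lemma measurable_q[measurable]:
  "q0 \<in> borel_measurable borel" "q1 \<in> borel_measurable borel"
  "q2 \<in> borel_measurable borel" "q3 \<in> borel_measurable borel"
  by (intro borel_measurable_continuous_onI continuous_q_id)+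

lemma measurable_q'[measurable (raw)]:
  "f \<in> borel_measurable M \<Longrightarrow> (\<lambda>x. q0 (f x)) \<in> borel_measurable M"
  "f \<in> borel_measurable M \<Longrightarrow> (\<lambda>x. q1 (f x)) \<in> borel_measurable M"
  "f \<in> borel_measurable M \<Longrightarrow> (\<lambda>x. q2 (f x)) \<in> borel_measurable M"
  "f \<in> borel_measurable M \<Longrightarrow> (\<lambda>x. q3 (f x)) \<in> borel_measurable M"
  using measurable_compose measurable_q by blast+

lemma measurable_qmult'[measurable (raw)]:
  assumes "f \<in> borel_measurable M" "g \<in> borel_measurable M"
  shows "(\<lambda>x. qmult (f x) (g x)) \<in> borel_measurable M"
proof -
  note [measurable] = assms
  show ?thesis unfolding qmult_comp by (intro borel_measurable_Pair) measurable
qed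

lemma measurable_qc[measurable]: "qc \<in> borel_measurable borel"
  by (intro borel_measurable_continuous_onI continuous_intros)

lemma S3_closed: "closed S3"
  unfolding S3_def by (intro closed_Collect_eq continuous_intros)
lemma S3_sets[measurable]: "S3 \<in> sets borel"
  using S3_closed by simp


lemma measurable_qc'[measurable (raw)]:
  "f \<in> borel_measurable M \<Longrightarrow> (\<lambda>x. qc (f x)) \<in> borel_measurable M"
  using measurable_compose measurable_qc by blast

lemma tonelli_swap:
  assumes "sigma_finite_measure M" "sigma_finite_measure N"
    and "(\<lambda>z. f (fst z) (snd z)) \<in> borel_measurable (M \<Otimes>\<^sub>M N)"
  shows "(\<integral>\<^sup>+ x. (\<integral>\<^sup>+ y. f x y \<partial>N) \<partial>M) = (\<integral>\<^sup>+ y. (\<integral>\<^sup>+ x. f x y \<partial>M) \<partial>N)"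
proof -
  interpret pair_sigma_finite M N using assms(1,2) by (simp add: pair_sigma_finite_def)
  have "case_prod f \<in> borel_measurable (M \<Otimes>\<^sub>M N)" using assms(3) by (simp add: case_prod_beta')
  from Fubini'[OF this] show ?thesis by simp
qed

locale haar3 = prob_space \<nu> for \<nu> :: "quat measure" +
  assumes space_eq: "space \<nu> = S3"
    and sets_eq: "sets \<nu> = sets (restrict_space borel S3)"
    and linv: "\<And>a. a \<in> S3 \<Longrightarrow> distr \<nu> \<nu> (qmult a) = \<nu>"
begin

lemma ident_meas[measurable]: "(\<lambda>x. x) \<in> measurable \<nu> borel"
proof -
  have "(\<lambda>x. x) \<in> measurable (restrict_space borel S3) borel"
    by (rule measurable_restrict_space1) simp
  then show ?thesis unfolding measurable_cong_sets[OF sets_eq refl] .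
qed

lemma borel_meas_nu[measurable (raw)]: "f \<in> borel_measurable borel \<Longrightarrow> f \<in> borel_measurable \<nu>"
  using measurable_compose[OF ident_meas] by blast

lemma qmult_meas_nu: "a \<in> S3 \<Longrightarrow> qmult a \<in> measurable \<nu> \<nu>"
proof -
  assume a: "a \<in> S3"
  have "qmult a \<in> measurable (restrict_space borel S3) (restrict_space borel S3)"
    by (rule measurable_restrict_space3) (auto simp: a S3_qmult)
  then show ?thesis unfolding measurable_cong_sets[OF sets_eq sets_eq] .
qed

lemma linv_nn:
  assumes a: "a \<in> S3" and f[measurable]: "f \<in> borel_measurable borel"
  shows "(\<integral>\<^sup>+ x. f (qmult a x) \<partial>\<nu>) = (\<integral>\<^sup>+ x. f x \<partial>\<nu>)"
proof -
  have "(\<integral>\<^sup>+ x. f x \<partial>\<nu>) = (\<integral>\<^sup>+ x. f x \<partial>distr \<nu> \<nu> (qmult a))" using linv[OF a] by simp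
  also have "\<dots> = (\<integral>\<^sup>+ x. f (qmult a x) \<partial>\<nu>)"
    by (rule nn_integral_distr[OF qmult_meas_nu[OF a]]) simp
  finally show ?thesis ..
qed

lemma linv_int:
  fixes f :: "quat \<Rightarrow> real"
  assumes a: "a \<in> S3" and f[measurable]: "f \<in> borel_measurable borel"
  shows "(\<integral> x. f (qmult a x) \<partial>\<nu>) = (\<integral> x. f x \<partial>\<nu>)"
proof -
  have "(\<integral> x. f x \<partial>\<nu>) = (\<integral> x. f x \<partial>distr \<nu> \<nu> (qmult a))" using linv[OF a] by simp
  also have "\<dots> = (\<integral> x. f (qmult a x) \<partial>\<nu>)"
    by (rule integral_distr[OF qmult_meas_nu[OF a]]) simp
  finally show ?thesis ..
qed

lemma sf: "sigma_finite_measure \<nu>" by (rule prob_space_imp_sigma_finite) (rule prob_space_axioms)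

lemma inv_nn:
  assumes f[measurable]: "f \<in> borel_measurable borel"
  shows "(\<integral>\<^sup>+ x. f (qc x) \<partial>\<nu>) = (\<integral>\<^sup>+ x. f x \<partial>\<nu>)"
proof -
  have "(\<integral>\<^sup>+ x. f x \<partial>\<nu>) = (\<integral>\<^sup>+ a. (\<integral>\<^sup>+ x. f x \<partial>\<nu>) \<partial>\<nu>)"
    by (simp add: emeasure_space_1)
  also have "\<dots> = (\<integral>\<^sup>+ a. (\<integral>\<^sup>+ x. f (qmult (qc a) x) \<partial>\<nu>) \<partial>\<nu>)"
    by (intro nn_integral_cong linv_nn[symmetric]) (auto simp: space_eq S3_qc)
  also have "\<dots> = (\<integral>\<^sup>+ x. (\<integral>\<^sup>+ a. f (qmult (qc a) x) \<partial>\<nu>) \<partial>\<nu>)"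
    by (rule tonelli_swap[OF sf sf]) measurable
  also have "\<dots> = (\<integral>\<^sup>+ x. (\<integral>\<^sup>+ a. f (qc a) \<partial>\<nu>) \<partial>\<nu>)"
  proof (rule nn_integral_cong)
    fix x assume x: "x \<in> space \<nu>"
    have "(\<integral>\<^sup>+ a. f (qmult (qc a) x) \<partial>\<nu>) = (\<integral>\<^sup>+ a. (\<lambda>w. f (qc w)) (qmult (qc x) a) \<partial>\<nu>)"
      by (simp add: qc_qmult)
    also have "\<dots> = (\<integral>\<^sup>+ a. f (qc a) \<partial>\<nu>)"
      by (rule linv_nn) (use x in \<open>auto simp: space_eq S3_qc\<close>)
    finally show "(\<integral>\<^sup>+ a. f (qmult (qc a) x) \<partial>\<nu>) = (\<integral>\<^sup>+ a. f (qc a) \<partial>\<nu>)" .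
  qed
  also have "\<dots> = (\<integral>\<^sup>+ a. f (qc a) \<partial>\<nu>)" by (simp add: emeasure_space_1)
  finally show ?thesis by (rule sym)
qed

lemma rinv_nn:
  assumes b: "b \<in> S3" and f[measurable]: "f \<in> borel_measurable borel"
  shows "(\<integral>\<^sup>+ x. f (qmult x b) \<partial>\<nu>) = (\<integral>\<^sup>+ x. f x \<partial>\<nu>)"
proof -
  have "(\<integral>\<^sup>+ x. f (qmult x b) \<partial>\<nu>) = (\<integral>\<^sup>+ x. (\<lambda>w. f (qmult (qc w) b)) (qc x) \<partial>\<nu>)" by simp
  also have "\<dots> = (\<integral>\<^sup>+ x. f (qmult (qc x) b) \<partial>\<nu>)" by (rule inv_nn) measurable
  also have "\<dots> = (\<integral>\<^sup>+ x. (\<lambda>w. f (qc w)) (qmult (qc b) x) \<partial>\<nu>)" by (simp add: qc_qmult)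
  also have "\<dots> = (\<integral>\<^sup>+ x. f (qc x) \<partial>\<nu>)" by (rule linv_nn) (auto simp: b S3_qc)
  also have "\<dots> = (\<integral>\<^sup>+ x. f x \<partial>\<nu>)" by (rule inv_nn) simp
  finally show ?thesis .
qed

end

lemma qtorus2_eq: "qtorus2 = S3 \<times> S3" by (auto simp: qtorus2_def S3_def)

lemma qmult_qone_fun: "qmult qone = (\<lambda>x. x)" by (rule ext) simp

lemma fst_borel[measurable]: "fst \<in> borel_measurable (borel :: ('a::topological_space \<times> 'b::topological_space) measure)"
  by (intro borel_measurable_continuous_onI continuous_intros)
lemma snd_borel[measurable]: "snd \<in> borel_measurable (borel :: ('a::topological_space \<times> 'b::topological_space) measure)"
  by (intro borel_measurable_continuous_onI continuous_intros)

definition RS :: "quat measure" where "RS = restrict_space borel S3"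

context
  fixes \<mu> :: "(quat \<times> quat) measure"
  assumes H: "is_haar_qtorus2 \<mu>"
begin

lemma H_inv: "(a, b) \<in> qtorus2 \<Longrightarrow> distr \<mu> \<mu> (\<lambda>(x, y). (qmult a x, qmult b y)) = \<mu>"
  using H unfolding is_haar_qtorus2_def by blast

lemma mu_prob: "prob_space \<mu>" using H by (simp add: is_haar_qtorus2_def)
lemma mu_space: "space \<mu> = S3 \<times> S3" using H by (simp add: is_haar_qtorus2_def qtorus2_eq)
lemma mu_sets: "sets \<mu> = sets (restrict_space borel (S3 \<times> S3))" using H by (simp add: is_haar_qtorus2_def qtorus2_eq)

lemma mu_ident[measurable]: "(\<lambda>x. x) \<in> measurable \<mu> borel"
proof -
  have "(\<lambda>x. x) \<in> measurable (restrict_space borel (S3 \<times> S3)) borel"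
    by (rule measurable_restrict_space1) simp
  then show ?thesis unfolding measurable_cong_sets[OF mu_sets refl] .
qed

lemma mu_T_meas:
  assumes "a \<in> S3" "b \<in> S3"
  shows "(\<lambda>(x, y). (qmult a x, qmult b y)) \<in> measurable \<mu> \<mu>"
proof -
  have "(\<lambda>(x, y). (qmult a x, qmult b y)) \<in> measurable (restrict_space borel (S3 \<times> S3)) (restrict_space borel (S3 \<times> S3))"
    by (rule measurable_restrict_space3) (auto simp: assms S3_qmult case_prod_beta' intro!: borel_measurable_Pair)
  then show ?thesis unfolding measurable_cong_sets[OF mu_sets mu_sets] .
qed

lemma mu_linv_nn:
  assumes a: "a \<in> S3" and b: "b \<in> S3" and f[measurable]: "f \<in> borel_measurable borel"
  shows "(\<integral>\<^sup>+ z. f (qmult a (fst z), qmult b (snd z)) \<partial>\<mu>) = (\<integral>\<^sup>+ z. f z \<partial>\<mu>)"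
proof -
  have "(a, b) \<in> qtorus2" using a b by (simp add: qtorus2_eq)
  then have "distr \<mu> \<mu> (\<lambda>(x, y). (qmult a x, qmult b y)) = \<mu>" by (rule H_inv)
  then have "(\<integral>\<^sup>+ z. f z \<partial>\<mu>) = (\<integral>\<^sup>+ z. f z \<partial>distr \<mu> \<mu> (\<lambda>(x, y). (qmult a x, qmult b y)))" by simp
  also have "\<dots> = (\<integral>\<^sup>+ z. f ((\<lambda>(x, y). (qmult a x, qmult b y)) z) \<partial>\<mu>)"
    by (rule nn_integral_distr[OF mu_T_meas[OF a b]]) simp
  finally show ?thesis by (simp add: case_prod_beta')
qed

definition mu1 where "mu1 = distr \<mu> RS fst"
definition mu2 where "mu2 = distr \<mu> RS snd"

lemma fst_meas: "fst \<in> measurable \<mu> RS"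
proof -
  have "fst \<in> measurable (restrict_space borel (S3 \<times> S3)) (restrict_space borel S3)"
    by (rule measurable_restrict_space3) auto
  then show ?thesis unfolding RS_def measurable_cong_sets[OF mu_sets refl] .
qed
lemma snd_meas: "snd \<in> measurable \<mu> RS"
proof -
  have "snd \<in> measurable (restrict_space borel (S3 \<times> S3)) (restrict_space borel S3)"
    by (rule measurable_restrict_space3) auto
  then show ?thesis unfolding RS_def measurable_cong_sets[OF mu_sets refl] .
qed

lemma RS_qmult: "a \<in> S3 \<Longrightarrow> qmult a \<in> measurable RS RS"
  unfolding RS_def by (rule measurable_restrict_space3) (auto simp: S3_qmult)

lemma haar_mu1: "haar3 mu1"
proof -
  interpret prob_space \<mu> by (rule mu_prob)
  show ?thesis
  unfolding haar3_def haar3_axioms_def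
  proof (intro conjI allI impI)
    show "prob_space mu1" unfolding mu1_def by (rule prob_space_distr[OF fst_meas])
    show "space mu1 = S3" by (simp add: mu1_def RS_def)
    show "sets mu1 = sets (restrict_space borel S3)" by (simp add: mu1_def RS_def)
    fix a assume a: "a \<in> S3"
    have "distr mu1 mu1 (qmult a) = distr mu1 RS (qmult a)"
      by (rule distr_cong) (auto simp: mu1_def)
    also have "\<dots> = distr \<mu> RS (qmult a \<circ> fst)"
      unfolding mu1_def by (rule distr_distr[OF RS_qmult[OF a] fst_meas])
    also have "\<dots> = distr (distr \<mu> \<mu> (\<lambda>(x, y). (qmult a x, qmult qone y))) RS fst"
      by (subst distr_distr[OF fst_meas mu_T_meas[OF a S3_qone]]) (auto intro!: distr_cong)
    also have "distr \<mu> \<mu> (\<lambda>(x, y). (qmult a x, qmult qone y)) = \<mu>"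
      using a S3_qone by (intro H_inv) (simp add: qtorus2_eq)
    finally show "distr mu1 mu1 (qmult a) = mu1" by (simp add: mu1_def)
  qed
qed

lemma haar_mu2: "haar3 mu2"
proof -
  interpret prob_space \<mu> by (rule mu_prob)
  show ?thesis
  unfolding haar3_def haar3_axioms_def
  proof (intro conjI allI impI)
    show "prob_space mu2" unfolding mu2_def by (rule prob_space_distr[OF snd_meas])
    show "space mu2 = S3" by (simp add: mu2_def RS_def)
    show "sets mu2 = sets (restrict_space borel S3)" by (simp add: mu2_def RS_def)
    fix a assume a: "a \<in> S3"
    have "distr mu2 mu2 (qmult a) = distr mu2 RS (qmult a)"
      by (rule distr_cong) (auto simp: mu2_def)
    also have "\<dots> = distr \<mu> RS (qmult a \<circ> snd)"
      unfolding mu2_def by (rule distr_distr[OF RS_qmult[OF a] snd_meas])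
    also have "\<dots> = distr (distr \<mu> \<mu> (\<lambda>(x, y). (qmult qone x, qmult a y))) RS snd"
      by (subst distr_distr[OF snd_meas mu_T_meas[OF S3_qone a]]) (auto intro!: distr_cong)
    also have "distr \<mu> \<mu> (\<lambda>(x, y). (qmult qone x, qmult a y)) = \<mu>"
      using a S3_qone by (intro H_inv) (simp add: qtorus2_eq)
    finally show "distr mu2 mu2 (qmult a) = mu2" by (simp add: mu2_def)
  qed
qed

lemma mu_product:
  fixes f :: "quat \<times> quat \<Rightarrow> ennreal"
  assumes f[measurable]: "f \<in> borel_measurable borel"
  shows "(\<integral>\<^sup>+ z. f z \<partial>\<mu>) = (\<integral>\<^sup>+ a. (\<integral>\<^sup>+ b. f (a, b) \<partial>mu2) \<partial>mu1)"
proof -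
  interpret prob_space \<mu> by (rule mu_prob)
  interpret M1: haar3 mu1 by (rule haar_mu1)
  interpret M2: haar3 mu2 by (rule haar_mu2)
  interpret P: pair_prob_space mu1 mu2
    by (simp add: pair_prob_space_def pair_sigma_finite_def M1.sf M2.sf M1.prob_space_axioms M2.prob_space_axioms)
  define C where "C = (\<integral>\<^sup>+ a. (\<integral>\<^sup>+ b. f (a, b) \<partial>mu2) \<partial>mu1)"
  have sfP: "sigma_finite_measure (mu1 \<Otimes>\<^sub>M mu2)"
    by (rule prob_space_imp_sigma_finite) (rule P.P.prob_space_axioms)
  have sfmu: "sigma_finite_measure \<mu>" by (rule prob_space_imp_sigma_finite) (rule prob_space_axioms)
  have "(\<integral>\<^sup>+ z. f z \<partial>\<mu>) = (\<integral>\<^sup>+ p. (\<integral>\<^sup>+ z. f z \<partial>\<mu>) \<partial>(mu1 \<Otimes>\<^sub>M mu2))"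
    by (simp add: P.P.emeasure_space_1)
  also have "\<dots> = (\<integral>\<^sup>+ p. (\<integral>\<^sup>+ z. f (qmult (fst p) (fst z), qmult (snd p) (snd z)) \<partial>\<mu>) \<partial>(mu1 \<Otimes>\<^sub>M mu2))"
    by (rule nn_integral_cong, rule mu_linv_nn[symmetric])
       (auto simp: space_pair_measure M1.space_eq M2.space_eq)
  also have "\<dots> = (\<integral>\<^sup>+ z. (\<integral>\<^sup>+ p. f (qmult (fst p) (fst z), qmult (snd p) (snd z)) \<partial>(mu1 \<Otimes>\<^sub>M mu2)) \<partial>\<mu>)"
    by (rule tonelli_swap[OF sfP sfmu]) measurable
  also have "\<dots> = (\<integral>\<^sup>+ z. C \<partial>\<mu>)"
  proof (rule nn_integral_cong)
    fix z assume z: "z \<in> space \<mu>"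
    then have x: "fst z \<in> S3" and y: "snd z \<in> S3" by (auto simp: mu_space)
    have "(\<integral>\<^sup>+ p. f (qmult (fst p) (fst z), qmult (snd p) (snd z)) \<partial>(mu1 \<Otimes>\<^sub>M mu2))
        = (\<integral>\<^sup>+ a. (\<integral>\<^sup>+ b. f (qmult a (fst z), qmult b (snd z)) \<partial>mu2) \<partial>mu1)"
    proof -
      have m: "(\<lambda>p. f (qmult (fst p) (fst z), qmult (snd p) (snd z))) \<in> borel_measurable (mu1 \<Otimes>\<^sub>M mu2)"
        by measurable
      show ?thesis using M2.nn_integral_fst[OF m] by simp
    qed
    also have "\<dots> = (\<integral>\<^sup>+ a. (\<integral>\<^sup>+ b. f (qmult a (fst z), b) \<partial>mu2) \<partial>mu1)"
      by (rule nn_integral_cong, rule M2.rinv_nn[OF y, of "\<lambda>b. f (qmult _ (fst z), b)"]) measurable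
    also have "\<dots> = (\<integral>\<^sup>+ b. (\<integral>\<^sup>+ a. f (qmult a (fst z), b) \<partial>mu1) \<partial>mu2)"
      by (rule tonelli_swap[OF M1.sf M2.sf]) measurable
    also have "\<dots> = (\<integral>\<^sup>+ b. (\<integral>\<^sup>+ a. f (a, b) \<partial>mu1) \<partial>mu2)"
      by (rule nn_integral_cong, rule M1.rinv_nn[OF x, of "\<lambda>a. f (a, _)"]) measurable
    also have "\<dots> = C"
      unfolding C_def by (rule tonelli_swap[OF M1.sf M2.sf, symmetric]) measurable
    finally show "(\<integral>\<^sup>+ p. f (qmult (fst p) (fst z), qmult (snd p) (snd z)) \<partial>(mu1 \<Otimes>\<^sub>M mu2)) = C" .
  qed
  also have "\<dots> = C" by (simp add: emeasure_space_1)
  finally show ?thesis unfolding C_def .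
qed

end

lemma inner_qone: "inner x qone = q0 x" by (simp add: inner_quat)

lemma even_sum_reindex:
  fixes g :: "nat \<Rightarrow> real"
  shows "(\<Sum>j\<le>n. g j * l^(2*j)) = (\<Sum>k\<le>2*n. (if even k then g (k div 2) else 0) * l^k)"
proof (induction n)
  case 0
  then show ?case by simp
next
  case (Suc n)
  have e: "2 * Suc n = Suc (Suc (2*n))" by simp
  show ?case unfolding e sum.atMost_Suc using Suc by simp
qed

context haar3 begin

lemma S3_norm: "x \<in> space \<nu> \<Longrightarrow> norm x = 1" by (simp add: space_eq S3_def)

lemma int_bounded:
  fixes f :: "quat \<Rightarrow> real"
  assumes f[measurable]: "f \<in> borel_measurable borel" and B: "\<And>x. norm x = 1 \<Longrightarrow> \<bar>f x\<bar> \<le> B"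
  shows "integrable \<nu> f"
  by (rule integrable_const_bound[where B=B]) (auto intro!: AE_I2 B simp: S3_norm)

lemma inner_bound: "norm x = 1 \<Longrightarrow> \<bar>inner x u\<bar> \<le> norm u"
  using Cauchy_Schwarz_ineq2[of x u] by simp

lemma int_inner_pow: "integrable \<nu> (\<lambda>x. (inner x u)^m * (inner x v)^k)"
proof (rule int_bounded[where B="norm u ^ m * norm v ^ k"])
  fix x :: quat assume "norm x = 1"
  then show "\<bar>(inner x u)^m * (inner x v)^k\<bar> \<le> norm u ^ m * norm v ^ k"
    by (auto simp: abs_mult power_abs intro!: mult_mono power_mono inner_bound)
qed measurable

definition c :: "nat \<Rightarrow> real" where "c m = (\<integral>x. (q0 x)^m \<partial>\<nu>)"

lemma unit_inv:
  assumes u: "norm u = 1" and v: "norm v = 1"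
  shows "(\<integral>x. (inner x u)^m \<partial>\<nu>) = (\<integral>x. (inner x v)^m \<partial>\<nu>)"
proof -
  define a where "a = qmult v (qc u)"
  have aS: "a \<in> S3" by (simp add: a_def S3_def norm_qmult u v)
  have au: "qmult a u = v" using u by (simp add: a_def qmult_assoc qmult_qc_S3 S3_def)
  have na: "norm a = 1" using aS by (simp add: S3_def)
  have "(\<integral>x. (inner x v)^m \<partial>\<nu>) = (\<integral>x. (inner (qmult a x) v)^m \<partial>\<nu>)"
    by (rule linv_int[OF aS, symmetric]) measurable
  also have "\<dots> = (\<integral>x. (inner x u)^m \<partial>\<nu>)"
    by (simp add: au[symmetric] inner_qmult_left na)
  finally show ?thesis ..
qed

lemma homog: "(\<integral>x. (inner x u)^m \<partial>\<nu>) = (norm u)^m * c m"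
proof (cases "u = 0")
  case True
  then show ?thesis by (cases m) (auto simp: c_def)
next
  case False
  define w where "w = (1 / norm u) *\<^sub>R u"
  have nw: "norm w = 1" using False by (simp add: w_def)
  have uw: "u = norm u *\<^sub>R w" using False by (simp add: w_def)
  have "(\<integral>x. (inner x u)^m \<partial>\<nu>) = (\<integral>x. (norm u)^m * (inner x w)^m \<partial>\<nu>)"
    by (subst uw) (simp add: power_mult_distrib)
  also have "\<dots> = (norm u)^m * (\<integral>x. (inner x w)^m \<partial>\<nu>)" by simp
  also have "(\<integral>x. (inner x w)^m \<partial>\<nu>) = (\<integral>x. (inner x qone)^m \<partial>\<nu>)"
    by (rule unit_inv[OF nw]) (simp add: qone_def norm_Pair)
  also have "\<dots> = c m" by (simp add: inner_qone c_def)
  finally show ?thesis .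
qed

lemma coeff:
  assumes e: "norm e = 1" and f: "norm f = 1" and ef: "inner e f = 0" and k: "k \<le> 2*n"
  shows "real (2*n choose k) * (\<integral>x. (inner x e)^(2*n-k) * (inner x f)^k \<partial>\<nu>)
       = c (2*n) * (if even k then real (n choose (k div 2)) else 0)"
proof -
  define M where "M k = (\<integral>x. (inner x e)^(2*n-k) * (inner x f)^k \<partial>\<nu>)" for k
  have "\<forall>l::real. (\<Sum>k\<le>2*n. (real (2*n choose k) * M k) * l^k)
       = (\<Sum>k\<le>2*n. (c (2*n) * (if even k then real (n choose (k div 2)) else 0)) * l^k)"
  proof
    fix l :: real
    have "(\<Sum>k\<le>2*n. (real (2*n choose k) * M k) * l^k)
        = (\<integral>x. (\<Sum>k\<le>2*n. real (2*n choose k) * (l * inner x f)^k * (inner x e)^(2*n-k)) \<partial>\<nu>)"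
    proof -
      have "(\<integral>x. (\<Sum>k\<le>2*n. real (2*n choose k) * (l * inner x f)^k * (inner x e)^(2*n-k)) \<partial>\<nu>)
          = (\<Sum>k\<le>2*n. (\<integral>x. real (2*n choose k) * (l * inner x f)^k * (inner x e)^(2*n-k) \<partial>\<nu>))"
      proof (rule Bochner_Integration.integral_sum)
        fix k
        have "integrable \<nu> (\<lambda>x. (real (2*n choose k) * l^k) * ((inner x e)^(2*n-k) * (inner x f)^k))"
          by (rule integrable_mult_right[OF int_inner_pow])
        then show "integrable \<nu> (\<lambda>x. real (2*n choose k) * (l * inner x f)^k * (inner x e)^(2*n-k))"
          by (simp add: power_mult_distrib mult_ac)
      qed
      also have "\<dots> = (\<Sum>k\<le>2*n. (real (2*n choose k) * M k) * l^k)"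
      proof (intro sum.cong refl)
        fix k
        show "(\<integral>x. real (2*n choose k) * (l * inner x f)^k * (inner x e)^(2*n-k) \<partial>\<nu>) = (real (2*n choose k) * M k) * l^k"
          unfolding M_def mult.assoc[of "real (2*n choose k)" "M k"] mult.commute[of "M k" "l^k"] mult.assoc[symmetric]
          by (subst integral_mult_right_zero[symmetric]) (simp add: power_mult_distrib mult_ac)
      qed
      finally show ?thesis ..
    qed
    also have "\<dots> = (\<integral>x. (inner x (e + l *\<^sub>R f))^(2*n) \<partial>\<nu>)"
      by (simp add: binomial_ring[symmetric] inner_add_right add.commute)
    also have "\<dots> = (norm (e + l *\<^sub>R f))^(2*n) * c (2*n)" by (rule homog)
    also have "(norm (e + l *\<^sub>R f))^2 = 1 + l^2"
    proof -
      have ee: "inner e e = 1" using e by (simp add: power2_norm_eq_inner[symmetric])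
      have ff: "inner f f = 1" using f by (simp add: power2_norm_eq_inner[symmetric])
      have fe: "inner f e = 0" using ef by (simp add: inner_commute)
      show ?thesis unfolding power2_norm_eq_inner
        by (simp add: inner_add_left inner_add_right ee ff ef fe power2_eq_square)
    qed
    then have "(norm (e + l *\<^sub>R f))^(2*n) = (1 + l^2)^n" by (simp add: power_mult)
    also have "(1 + l^2)^n = (\<Sum>j\<le>n. real (n choose j) * l^(2*j))"
      by (subst add.commute, subst binomial_ring) (simp add: power_mult)
    also have "\<dots> = (\<Sum>k\<le>2*n. (if even k then real (n choose (k div 2)) else 0) * l^k)"
      by (rule even_sum_reindex)
    finally show "(\<Sum>k\<le>2*n. (real (2*n choose k) * M k) * l^k)
       = (\<Sum>k\<le>2*n. (c (2*n) * (if even k then real (n choose (k div 2)) else 0)) * l^k)"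
      by (simp add: sum_distrib_left sum_distrib_right mult_ac)
  qed
  then have "\<forall>i\<le>2*n. real (2*n choose i) * M i = c (2*n) * (if even i then real (n choose (i div 2)) else 0)"
    by (subst (asm) polyfun_eq_coeffs) blast
  then show ?thesis using k unfolding M_def by blast
qed

end

definition D :: "nat \<Rightarrow> real" where "D n = fact (2*n) / (4^n * (fact n)^2)"

lemma D_0[simp]: "D 0 = 1" by (simp add: D_def)

lemma D_Suc: "D (Suc k) = D k * (2 * real k + 1) / (2 * real k + 2)"
proof -
  have f2: "fact (2 * Suc k) = (2 * real k + 2) * (2 * real k + 1) * (fact (2*k) :: real)"
    by (simp add: fact_Suc algebra_simps)
  have f1: "fact (Suc k) = (real k + 1) * (fact k :: real)" by (simp add: fact_Suc algebra_simps)
  have p1: "(fact k :: real) > 0" by simp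
  have p2: "(4::real)^k > 0" by simp
  show ?thesis unfolding D_def f2 f1 using p1 p2
    by (simp add: divide_simps power2_eq_square) (simp add: algebra_simps)
qed

lemma gb_Suc: "((a::real) gchoose (Suc k)) = (a gchoose k) * (a - real k) / (real k + 1)"
proof -
  have "fact (Suc k) * (a gchoose Suc k) = (\<Prod>i = 0..<Suc k. a - of_nat i)" by (rule gbinomial_mult_fact)
  also have "\<dots> = (\<Prod>i = 0..<k. a - of_nat i) * (a - real k)" by simp
  also have "(\<Prod>i = 0..<k. a - of_nat i) = fact k * (a gchoose k)" by (rule gbinomial_mult_fact[symmetric])
  finally have eq: "fact (Suc k) * (a gchoose Suc k) = fact k * (a gchoose k) * (a - real k)" .
  have "(real k + 1) * (a gchoose Suc k) = (a gchoose k) * (a - real k)"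
  proof -
    have "fact k * ((real k + 1) * (a gchoose Suc k)) = fact k * ((a gchoose k) * (a - real k))"
      using eq by (simp add: fact_Suc algebra_simps)
    then show ?thesis by simp
  qed
  then show ?thesis by (simp add: field_simps)
qed

lemma D_gchoose: "D k = (-1)^k * ((-1/2::real) gchoose k)"
proof (induction k)
  case 0 then show ?case by simp
next
  case (Suc k)
  show ?case unfolding D_Suc Suc gb_Suc by (simp add: field_simps)
qed

lemma D_conv: "(\<Sum>j\<le>n. D j * D (n - j)) = 1"
proof -
  have "(\<Sum>j\<le>n. D j * D (n - j)) = (\<Sum>j=0..n. (-1)^n * (((-1/2::real) gchoose j) * ((-1/2) gchoose (n - j))))"
    unfolding atMost_atLeast0
    by (intro sum.cong refl) (simp add: D_gchoose power_add[symmetric])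
  also have "\<dots> = (-1)^n * ((-1/2 + -1/2::real) gchoose n)"
    by (simp add: sum_distrib_left[symmetric] gbinomial_Vandermonde)
  also have "(-1/2 + -1/2::real) = - 1" by simp
  also have "((-1::real) gchoose n) = (-1)^n"
    using gbinomial_minus[of "1::real" n] binomial_gbinomial[of n n, where 'a=real] by simp
  finally show ?thesis by (simp add: power_mult_distrib[symmetric])
qed

lemma D_binom:
  assumes "j \<le> n"
  shows "real (n choose j) ^ 2 * D n = real (2*n choose (2*j)) * D j * D (n - j)"
proof -
  have a: "real (n choose j) = fact n / (fact j * fact (n - j))" using assms by (rule binomial_fact)
  have b: "real (2*n choose (2*j)) = fact (2*n) / (fact (2*j) * fact (2*n - 2*j))"
    using assms by (intro binomial_fact) simp
  have c: "2*n - 2*j = 2*(n-j)" by simp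
  have d: "(4::real)^n = 4^j * 4^(n-j)" using assms by (simp add: power_add[symmetric])
  show ?thesis unfolding a b c D_def d
    by (simp add: field_simps power2_eq_square)
qed

lemma frac_aux: "(A::real) \<noteq> 0 \<Longrightarrow> C \<noteq> 0 \<Longrightarrow> (k::real) \<ge> 0 \<Longrightarrow> (X * A / C) / ((k + 1) * A) = X / (C * (k + 1))"
proof -
  assume A: "A \<noteq> 0"
  have "X * A / C / ((k+1)*A) = (X*A) / ((C*(k+1))*A)" by (simp add: divide_divide_eq_left mult_ac)
  also have "\<dots> = X/(C*(k+1))" using A by (rule nonzero_mult_divide_mult_cancel_right)
  finally show ?thesis .
qed

definition e0 :: quat where "e0 = (1,0,0,0)"
definition e1 :: quat where "e1 = (0,1,0,0)"
definition e2 :: quat where "e2 = (0,0,1,0)"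
definition e3 :: quat where "e3 = (0,0,0,1)"

lemma inner_e[simp]: "inner x e0 = q0 x" "inner x e1 = q1 x" "inner x e2 = q2 x" "inner x e3 = q3 x"
  by (simp_all add: inner_quat e0_def e1_def e2_def e3_def)
lemma norm_e[simp]: "norm e0 = 1" "norm e1 = 1" "norm e2 = 1" "norm e3 = 1"
  by (simp_all add: norm_Pair e0_def e1_def e2_def e3_def)
lemma inner_ee[simp]: "inner e0 e1 = 0" "inner e0 e2 = 0" "inner e0 e3 = 0" "inner e2 e3 = 0"
  by (simp_all add: inner_quat e0_def e1_def e2_def e3_def)

lemma q_e[simp]: "q0 e0 = 1" "q1 e0 = 0" "q2 e0 = 0" "q3 e0 = 0"
  "q0 e1 = 0" "q1 e1 = 1" "q2 e1 = 0" "q3 e1 = 0"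
  "q0 e2 = 0" "q1 e2 = 0" "q2 e2 = 1" "q3 e2 = 0"
  "q0 e3 = 0" "q1 e3 = 0" "q2 e3 = 0" "q3 e3 = 1"
  by (simp_all add: e0_def e1_def e2_def e3_def)

definition s :: "quat \<Rightarrow> real" where "s x = (q2 x)^2 + (q3 x)^2"

lemma s_meas[measurable]: "s \<in> borel_measurable borel" unfolding s_def by measurable

context haar3 begin

lemma c_0: "c 0 = 1" by (simp add: c_def prob_space)

lemma mixed2:
  assumes "norm f = 1" "inner e0 f = 0"
  shows "(\<integral>x. (q0 x)^(2*m) * (inner x f)^2 \<partial>\<nu>) = c (2*Suc m) / (2 * real m + 1)"
proof -
  have "real (2*Suc m choose 2) * (\<integral>x. (inner x e0)^(2*Suc m-2) * (inner x f)^2 \<partial>\<nu>)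
       = c (2*Suc m) * (if even (2::nat) then real (Suc m choose (2 div 2)) else 0)"
    by (rule coeff) (use assms in auto)
  moreover have "real (2*Suc m choose 2) = (real m + 1) * (2 * real m + 1)"
    by (simp add: choose_two of_nat_diff algebra_simps)
  moreover have "2*Suc m - 2 = 2*m" by simp
  ultimately have "(real m + 1) * ((2 * real m + 1) * (\<integral>x. (q0 x)^(2*m) * (inner x f)^2 \<partial>\<nu>)) = (real m + 1) * c (2*Suc m)"
    by (simp add: mult_ac)
  then have "(2 * real m + 1) * (\<integral>x. (q0 x)^(2*m) * (inner x f)^2 \<partial>\<nu>) = c (2*Suc m)"
    by (subst (asm) mult_cancel_left) simp
  then show ?thesis by (simp add: field_simps)
qed

lemma c_rec: "c (2*Suc m) = c (2*m) * (2 * real m + 1) / (2 * real m + 4)"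
proof -
  have "c (2*m) = (\<integral>x. (q0 x)^(2*m) * ((q0 x)^2 + (q1 x)^2 + (q2 x)^2 + (q3 x)^2) \<partial>\<nu>)"
    unfolding c_def
  proof (rule Bochner_Integration.integral_cong[OF refl])
    fix x assume "x \<in> space \<nu>"
    then have "(q0 x)^2 + (q1 x)^2 + (q2 x)^2 + (q3 x)^2 = 1" using S3_norm[of x] norm_quat_sq[of x] by simp
    then show "(q0 x)^(2*m) = (q0 x)^(2*m) * ((q0 x)^2 + (q1 x)^2 + (q2 x)^2 + (q3 x)^2)" by simp
  qed
  also have "\<dots> = (\<integral>x. (q0 x)^(2*Suc m) + (q0 x)^(2*m) * (inner x e1)^2 + (q0 x)^(2*m) * (inner x e2)^2 + (q0 x)^(2*m) * (inner x e3)^2 \<partial>\<nu>)"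
    by (simp add: algebra_simps power_add[symmetric])
  also have "\<dots> = c (2*Suc m) + 3 * (c (2*Suc m) / (2 * real m + 1))"
  proof -
    have i0: "integrable \<nu> (\<lambda>x. (q0 x)^(2*Suc m))" using int_inner_pow[of e0 "2*Suc m" _ 0] by simp
    have ik: "integrable \<nu> (\<lambda>x. (q0 x)^(2*m) * (inner x f)^2)" for f using int_inner_pow[of e0 "2*m" f 2] by simp
    have "(\<integral>x. (q0 x)^(2*Suc m) + (q0 x)^(2*m) * (inner x e1)^2 + (q0 x)^(2*m) * (inner x e2)^2 + (q0 x)^(2*m) * (inner x e3)^2 \<partial>\<nu>)
      = (\<integral>x. (q0 x)^(2*Suc m) \<partial>\<nu>) + (\<integral>x. (q0 x)^(2*m) * (inner x e1)^2 \<partial>\<nu>) + (\<integral>x. (q0 x)^(2*m) * (inner x e2)^2 \<partial>\<nu>) + (\<integral>x. (q0 x)^(2*m) * (inner x e3)^2 \<partial>\<nu>)"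
      using i0 ik[of e1] ik[of e2] ik[of e3] by (simp del: inner_e)
    also have "\<dots> = c (2*Suc m) + 3 * (c (2*Suc m) / (2 * real m + 1))"
      using mixed2[of e1 m] mixed2[of e2 m] mixed2[of e3 m] by (simp add: c_def del: inner_e)
    finally show ?thesis by (simp del: inner_e)
  qed
  finally have "c (2*m) = c (2*Suc m) * ((2 * real m + 4) / (2 * real m + 1))"
    by (simp add: field_simps)
  then show ?thesis by (simp add: field_simps)
qed

lemma c_closed: "c (2*n) = D n / (real n + 1)"
proof (induction n)
  case 0 then show ?case by (simp add: c_0)
next
  case (Suc n)
  show ?case unfolding c_rec Suc D_Suc by (simp add: field_simps)
qed

lemma s_moment: "(\<integral>x. (s x)^n \<partial>\<nu>) = 1 / (real n + 1)"
proof -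
  have co: "(\<integral>x. (q2 x)^(2*n - 2*j) * (q3 x)^(2*j) \<partial>\<nu>) = D j * D (n - j) / (real (n choose j) * (real n + 1))"
    if j: "j \<le> n" for j
  proof -
    have "real (2*n choose (2*j)) * (\<integral>x. (inner x e2)^(2*n-2*j) * (inner x e3)^(2*j) \<partial>\<nu>)
       = c (2*n) * (if even (2*j) then real (n choose (2*j div 2)) else 0)"
      by (rule coeff) (use j in auto)
    then have hyp: "real (2*n choose (2*j)) * (\<integral>x. (q2 x)^(2*n-2*j) * (q3 x)^(2*j) \<partial>\<nu>) = D n / (real n + 1) * real (n choose j)"
      by (simp add: c_closed)
    have A0: "real (2*n choose (2*j)) \<noteq> 0" using j by simp
    have "(\<integral>x. (q2 x)^(2*n-2*j) * (q3 x)^(2*j) \<partial>\<nu>) = real (2*n choose (2*j)) * (\<integral>x. (q2 x)^(2*n-2*j) * (q3 x)^(2*j) \<partial>\<nu>) / real (2*n choose (2*j))"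
      using A0 by simp
    also have "\<dots> = D n / (real n + 1) * real (n choose j) / real (2*n choose (2*j))" by (simp only: hyp)
    finally have E: "(\<integral>x. (q2 x)^(2*n-2*j) * (q3 x)^(2*j) \<partial>\<nu>) = D n * real (n choose j) / ((real n + 1) * real (2*n choose (2*j)))"
      by simp
    have B: "D n * real (n choose j) = D j * D (n - j) * real (2*n choose (2*j)) / real (n choose j)"
      using D_binom[OF j] j by (simp add: field_simps power2_eq_square)
    have C0: "real (n choose j) \<noteq> 0" using j by simp
    show ?thesis unfolding E B by (rule frac_aux[OF A0 C0]) simp
  qed
  have "(\<integral>x. (s x)^n \<partial>\<nu>) = (\<integral>x. (\<Sum>j\<le>n. real (n choose j) * ((q2 x)^(2*n - 2*j) * (q3 x)^(2*j))) \<partial>\<nu>)"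
    unfolding s_def
    by (subst add.commute, subst binomial_ring) (auto intro!: Bochner_Integration.integral_cong sum.cong simp: power_mult[symmetric] diff_mult_distrib2 diff_mult_distrib mult_ac)
  also have "\<dots> = (\<Sum>j\<le>n. real (n choose j) * (\<integral>x. (q2 x)^(2*n - 2*j) * (q3 x)^(2*j) \<partial>\<nu>))"
    by (subst Bochner_Integration.integral_sum) (auto intro!: integrable_mult_right simp: int_inner_pow[of e2 _ e3, simplified])
  also have "\<dots> = (\<Sum>j\<le>n. D j * D (n - j) / (real n + 1))"
    by (intro sum.cong refl) (simp add: co)
  also have "\<dots> = 1 / (real n + 1)"
    by (simp add: sum_divide_distrib[symmetric] D_conv)
  finally show ?thesis .
qed

end

lemma deriv_mono_term: "((\<lambda>t. a * t^(Suc i) / (real i + 1)) has_real_derivative a * x^i) (at x within S)"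
proof -
  have "((\<lambda>t. a * t^(Suc i) / (real i + 1)) has_real_derivative a * (real (Suc i) * x^i) / (real i + 1)) (at x within S)"
  proof -
    have "((\<lambda>x. x^Suc i) has_real_derivative real (Suc i) * x^i) (at x within S)"
      using DERIV_pow[of "Suc i" x] has_field_derivative_at_within by simp
    then show ?thesis by (intro DERIV_cdivide DERIV_cmult)
  qed
  moreover have "a * (real (Suc i) * x^i) / (real i + 1) = a * x^i"
  proof -
    have nz: "1 + real i \<noteq> 0" by linarith
    have "a * (real (Suc i) * x^i) / (real i + 1) = a * ((1 + real i) * x^i) / (1 + real i)"
      by (simp add: add.commute)
    also have "\<dots> = a * x^i" using nz by simp
    finally show ?thesis .
  qed
  ultimately show ?thesis by simp
qed

lemma poly_has_integral01:
  "((\<lambda>t. \<Sum>i\<le>N. a i * t^i) has_integral (\<Sum>i\<le>N. a i / (real i + 1))) {0..1::real}"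
proof -
  have "((\<lambda>t. \<Sum>i\<le>N. a i * t^i) has_integral ((\<lambda>t. \<Sum>i\<le>N. a i * t^(Suc i) / (real i + 1)) 1 - (\<lambda>t. \<Sum>i\<le>N. a i * t^(Suc i) / (real i + 1)) 0)) {0..1::real}"
  proof (rule fundamental_theorem_of_calculus)
    show "0 \<le> (1::real)" by simp
    fix x :: real assume "x \<in> {0..1}"
    have "((\<lambda>t. \<Sum>i\<le>N. a i * t^(Suc i) / (real i + 1)) has_real_derivative (\<Sum>i\<le>N. a i * x^i)) (at x within {0..1})"
      by (rule DERIV_sum) (rule deriv_mono_term)
    then show "((\<lambda>t. \<Sum>i\<le>N. a i * t^(Suc i) / (real i + 1)) has_vector_derivative (\<Sum>i\<le>N. a i * x^i)) (at x within {0..1})"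
      by (simp add: has_real_derivative_iff_has_vector_derivative)
  qed
  then show ?thesis by simp
qed

context haar3 begin

lemma s_range': "norm x = 1 \<Longrightarrow> 0 \<le> s x \<and> s x \<le> 1"
proof -
  assume "norm x = 1"
  then have "(q0 x)^2 + (q1 x)^2 + (q2 x)^2 + (q3 x)^2 = 1" using norm_quat_sq[of x] by simp
  moreover have "0 \<le> (q0 x)^2" "0 \<le> (q1 x)^2" "0 \<le> (q2 x)^2" "0 \<le> (q3 x)^2" by simp_all
  ultimately show ?thesis unfolding s_def by linarith
qed

lemma s_range: "x \<in> space \<nu> \<Longrightarrow> 0 \<le> s x \<and> s x \<le> 1"
  using s_range' S3_norm by blast

lemma int_s_pow: "integrable \<nu> (\<lambda>x. k0 * (s x)^k)"
proof (rule int_bounded[where B="\<bar>k0\<bar>"])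
  fix x :: quat assume "norm x = 1"
  then have "0 \<le> s x" "s x \<le> 1" using s_range' by auto
  then have "\<bar>(s x)^k\<bar> \<le> 1" by (simp add: power_le_one)
  then show "\<bar>k0 * (s x)^k\<bar> \<le> \<bar>k0\<bar>" by (simp add: abs_mult mult_left_le)
qed measurable

lemma int_s_pow1: "integrable \<nu> (\<lambda>x. (s x)^k)" using int_s_pow[of 1] by simp

lemma poly_expect: "(\<integral>x. (\<Sum>i\<le>N. a i * (s x)^i) \<partial>\<nu>) = (\<Sum>i\<le>N. a i / (real i + 1))"
  by (subst Bochner_Integration.integral_sum) (auto simp: int_s_pow int_s_pow1 s_moment)

lemma weierstrass_expect:
  fixes g :: "real \<Rightarrow> real"
  assumes g[measurable]: "g \<in> borel_measurable borel" and cg: "continuous_on {0..1} g"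
  shows "integrable \<nu> (\<lambda>x. g (s x))" "(\<integral>x. g (s x) \<partial>\<nu>) = integral {0..1} g"
proof -
  have "bounded (g ` {0..1})" by (rule compact_imp_bounded[OF compact_continuous_image[OF cg compact_Icc]])
  then obtain B where "\<forall>y\<in>g ` {0..1}. norm y \<le> B" by (auto simp: bounded_iff)
  then have B: "\<And>t. t \<in> {0..1} \<Longrightarrow> \<bar>g t\<bar> \<le> B" by auto
  show ig: "integrable \<nu> (\<lambda>x. g (s x))"
    by (rule integrable_const_bound[where B=B]) (auto intro!: AE_I2 B simp: s_range)
  have ig01: "g integrable_on {0..1}" by (rule integrable_continuous_interval[OF cg])
  have close: "\<bar>(\<integral>x. g (s x) \<partial>\<nu>) - integral {0..1} g\<bar> \<le> 2 * e" if e: "e > 0" for e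
  proof -
    obtain p where p: "real_polynomial_function p" and pe: "\<And>t. t \<in> {0..1} \<Longrightarrow> \<bar>g t - p t\<bar> < e"
      using Stone_Weierstrass_real_polynomial_function[OF compact_Icc cg e] by blast
    obtain a N where pa: "p = (\<lambda>x. \<Sum>i\<le>N. a i * x^i)" using real_polynomial_function_imp_sum[OF p] by blast
    have cp: "continuous_on {0..1} p" unfolding pa by (intro continuous_intros)
    have ip: "integrable \<nu> (\<lambda>x. p (s x))" unfolding pa
      by (rule Bochner_Integration.integrable_sum) (rule int_s_pow)
    have Ep: "(\<integral>x. p (s x) \<partial>\<nu>) = (\<Sum>i\<le>N. a i / (real i + 1))" unfolding pa by (rule poly_expect)
    have Ip: "integral {0..1} p = (\<Sum>i\<le>N. a i / (real i + 1))"
      unfolding pa using poly_has_integral01 by (rule integral_unique)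
    have "\<bar>(\<integral>x. g (s x) \<partial>\<nu>) - (\<integral>x. p (s x) \<partial>\<nu>)\<bar> = \<bar>\<integral>x. g (s x) - p (s x) \<partial>\<nu>\<bar>"
      using ig ip by simp
    also have "\<dots> \<le> (\<integral>x. \<bar>g (s x) - p (s x)\<bar> \<partial>\<nu>)"
      by (rule integral_abs_bound)
    also have "\<dots> \<le> (\<integral>x. e \<partial>\<nu>)"
      by (rule integral_mono) (auto intro!: Bochner_Integration.integrable_diff ig ip less_imp_le[OF pe] simp: s_range)
    also have "\<dots> = e" by (simp add: prob_space)
    finally have 1: "\<bar>(\<integral>x. g (s x) \<partial>\<nu>) - (\<integral>x. p (s x) \<partial>\<nu>)\<bar> \<le> e" .
    have "\<bar>integral {0..1} g - integral {0..1} p\<bar> = \<bar>integral {0..1} (\<lambda>t. g t - p t)\<bar>"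
      using ig01 integrable_continuous_interval[OF cp] by (simp add: integral_diff)
    also have "\<dots> \<le> e * (1 - 0)"
    proof -
      have "\<And>t. t \<in> {0..1} \<Longrightarrow> norm (g t - p t) \<le> e" using pe by (simp add: less_imp_le)
      then show ?thesis using integral_bound[of 0 1 "\<lambda>t. g t - p t" e] continuous_on_diff[OF cg cp] by simp
    qed
    finally have 2: "\<bar>integral {0..1} g - integral {0..1} p\<bar> \<le> e" by simp
    show ?thesis using 1 2 Ep Ip by linarith
  qed
  show "(\<integral>x. g (s x) \<partial>\<nu>) = integral {0..1} g"
  proof (rule ccontr)
    assume ne: "(\<integral>x. g (s x) \<partial>\<nu>) \<noteq> integral {0..1} g"
    define d where "d = \<bar>(\<integral>x. g (s x) \<partial>\<nu>) - integral {0..1} g\<bar>"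
    have "d > 0" using ne by (simp add: d_def)
    then have "d \<le> 2 * (d/4)" using close[of "d/4"] by (simp add: d_def)
    with \<open>d > 0\<close> show False by simp
  qed
qed

end

definition Th :: "real measure" where "Th = restrict_space lborel {0..2*pi}"

lemma Th_space: "space Th = {0..2*pi}" by (simp add: Th_def)
lemma Th_meas[measurable (raw)]: "f \<in> borel_measurable borel \<Longrightarrow> f \<in> borel_measurable Th"
  unfolding Th_def by (rule measurable_restrict_space1) simp
lemma Th_emeasure: "emeasure Th (space Th) = ennreal (2*pi)"
  by (simp add: Th_def emeasure_restrict_space)
lemma Th_finite: "finite_measure Th"
  by (rule finite_measureI) (simp add: Th_emeasure)

lemma Th_int_cos: "(\<integral>t. cos (real n * t) \<partial>Th) = (if n = 0 then 2*pi else 0)"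
proof -
  have "(\<integral>t. cos (real n * t) \<partial>Th) = (\<integral>t. cos (real n * t) * indicator {0..2*pi} t \<partial>lborel)"
    unfolding Th_def by (subst integral_restrict_space) (auto simp: mult.commute)
  also have "\<dots> = (if n = 0 then 2*pi else 0)"
  proof (cases "n = 0")
    case True
    have "(\<integral>t. cos (real n * t) * indicator {0..2*pi} t \<partial>lborel) = (\<lambda>t. t) (2*pi) - (\<lambda>t. t) 0"
      by (rule integral_FTC_Icc_real) (auto simp: True intro!: derivative_eq_intros)
    then show ?thesis using True by simp
  next
    case False
    have "(\<integral>t. cos (real n * t) * indicator {0..2*pi} t \<partial>lborel) = (\<lambda>t. sin (real n * t) / real n) (2*pi) - (\<lambda>t. sin (real n * t) / real n) 0"
      by (rule integral_FTC_Icc_real) (use False in \<open>auto intro!: derivative_eq_intros continuous_intros\<close>)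
    also have "sin (real n * (2*pi)) = sin (real (2*n) * pi)" by (simp add: mult_ac)
    then have "sin (real n * (2*pi)) = 0" by simp
    finally show ?thesis using False by simp
  qed
  finally show ?thesis .
qed

lemma Th_int_sin: "(\<integral>t. sin (real n * t) \<partial>Th) = 0"
proof -
  have "(\<integral>t. sin (real n * t) \<partial>Th) = (\<integral>t. sin (real n * t) * indicator {0..2*pi} t \<partial>lborel)"
    unfolding Th_def by (subst integral_restrict_space) (auto simp: mult.commute)
  also have "\<dots> = 0"
  proof (cases "n = 0")
    case True then show ?thesis by simp
  next
    case False
    have "(\<integral>t. sin (real n * t) * indicator {0..2*pi} t \<partial>lborel) = (\<lambda>t. - cos (real n * t) / real n) (2*pi) - (\<lambda>t. - cos (real n * t) / real n) 0"
      by (rule integral_FTC_Icc_real) (use False in \<open>auto intro!: derivative_eq_intros continuous_intros\<close>)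
    also have "cos (real n * (2*pi)) = cos (real (2*n) * pi)" by (simp add: mult_ac)
    then have "cos (real n * (2*pi)) = 1" by (simp add: cos_npi)
    finally show ?thesis by simp
  qed
  finally show ?thesis .
qed

lemma jensen0:
  fixes v :: complex
  assumes v: "cmod v < 1"
  shows "integrable Th (\<lambda>t. ln (cmod (1 - cis t * v)))" "(\<integral>t. ln (cmod (1 - cis t * v)) \<partial>Th) = 0"
proof -
  interpret finite_measure Th by (rule Th_finite)
  define f where "f n t = - Re ((cis t * v)^n) / real n" for n t
  have ser: "(\<lambda>n. f n t) sums ln (cmod (1 - cis t * v))" for t
  proof -
    have n1: "cmod (- (cis t * v)) < 1" using v by (simp add: norm_mult)
    have "(\<lambda>n. - ((- (- (cis t * v)))^n) / of_nat n) sums ln (1 + - (cis t * v))"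
      by (rule Ln_series'[OF n1])
    then have "(\<lambda>n. Re (- ((cis t * v)^n) / of_nat n)) sums Re (ln (1 - cis t * v))"
      by (intro sums_Re) simp
    moreover have "1 - cis t * v \<noteq> 0"
    proof
      assume "1 - cis t * v = 0"
      then have "cmod (cis t * v) = 1" by (metis eq_iff_diff_eq_0 norm_one)
      with v show False by (simp add: norm_mult)
    qed
    ultimately show ?thesis by (simp add: f_def)
  qed
  have fn: "f n t = - (Re (v^n) * cos (real n * t) - Im (v^n) * sin (real n * t)) / real n" for n t
  proof -
    have c1: "Re (cis t ^ n) = cos (real n * t)" by (rule cos_n_Re_cis_pow_n[symmetric])
    have c2: "Im (cis t ^ n) = sin (real n * t)" by (rule sin_n_Im_cis_pow_n[symmetric])
    show ?thesis by (simp only: f_def power_mult_distrib) (simp add: c1 c2 algebra_simps)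
  qed
  have bnd: "\<bar>f n t\<bar> \<le> cmod v ^ n" for n t
  proof -
    have "\<bar>Re ((cis t * v)^n)\<bar> \<le> cmod ((cis t * v)^n)" by (rule abs_Re_le_cmod)
    also have "\<dots> = cmod v ^ n" by (simp add: norm_power norm_mult)
    finally have a: "\<bar>Re ((cis t * v)^n)\<bar> \<le> cmod v ^ n" .
    show ?thesis
    proof (cases "n = 0")
      case True then show ?thesis by (simp add: f_def)
    next
      case False
      then have "real n \<ge> 1" by simp
      have e: "\<bar>f n t\<bar> = \<bar>Re ((cis t * v)^n)\<bar> / real n" unfolding f_def by simp
      have "\<bar>Re ((cis t * v)^n)\<bar> * 1 \<le> \<bar>Re ((cis t * v)^n)\<bar> * real n"
        using \<open>real n \<ge> 1\<close> by (intro mult_left_mono) auto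
      then have "\<bar>f n t\<bar> \<le> \<bar>Re ((cis t * v)^n)\<bar>" unfolding e using \<open>real n \<ge> 1\<close>
        by (simp add: divide_le_eq)
      with a show ?thesis by linarith
    qed
  qed
  have mf[measurable]: "(\<lambda>t. f n t) \<in> borel_measurable borel" for n
    unfolding fn by measurable
  have intf: "integrable Th (f n)" for n
    by (rule integrable_const_bound[where B="cmod v ^ n"]) (auto intro!: AE_I2 simp: bnd)
  have geo: "summable (\<lambda>n. cmod v ^ n)" by (rule summable_geometric) (use v in simp)
  have sumn: "summable (\<lambda>n. norm (f n t))" for t
    by (rule summable_comparison_test'[OF geo, of 0]) (simp add: bnd)
  have intnorm: "(\<integral>t. norm (f n t) \<partial>Th) \<le> 2*pi * cmod v ^ n" for n
  proof -
    have "(\<integral>t. norm (f n t) \<partial>Th) \<le> (\<integral>t. cmod v ^ n \<partial>Th)"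
      by (rule integral_mono) (auto simp: bnd intf)
    also have "\<dots> = 2*pi * cmod v ^ n" using Th_emeasure by (simp add: measure_def)
    finally show ?thesis .
  qed
  have sumint: "summable (\<lambda>n. (\<integral>t. norm (f n t) \<partial>Th))"
    by (rule summable_comparison_test'[where g="\<lambda>n. 2*pi * cmod v ^ n" and N=0])
       (use v intnorm in \<open>auto intro!: summable_mult geo simp: integral_nonneg_AE\<close>)
  have eqs: "ln (cmod (1 - cis t * v)) = (\<Sum>n. f n t)" for t using ser[of t] by (simp add: sums_iff)
  show "integrable Th (\<lambda>t. ln (cmod (1 - cis t * v)))"
    unfolding eqs by (rule integrable_suminf[OF intf AE_I2[OF sumn] sumint])
  have "(\<integral>t. ln (cmod (1 - cis t * v)) \<partial>Th) = (\<Sum>n. (\<integral>t. f n t \<partial>Th))"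
    unfolding eqs by (rule integral_suminf[OF intf AE_I2[OF sumn] sumint])
  also have "(\<lambda>n. (\<integral>t. f n t \<partial>Th)) = (\<lambda>n. 0)"
  proof
    fix n
    show "(\<integral>t. f n t \<partial>Th) = 0"
    proof (cases "n = 0")
      case True then show ?thesis by (simp add: f_def)
    next
      case False
      have ic: "integrable Th (\<lambda>t. cos (real n * t))"
        by (rule integrable_const_bound[where B=1]) auto
      have is': "integrable Th (\<lambda>t. sin (real n * t))"
        by (rule integrable_const_bound[where B=1]) auto
      have "(\<integral>t. f n t \<partial>Th) = - (Re (v^n) * (\<integral>t. cos (real n * t) \<partial>Th) - Im (v^n) * (\<integral>t. sin (real n * t) \<partial>Th)) / real n"
        unfolding fn using ic is' by simp
      then show ?thesis using False by (simp add: Th_int_cos Th_int_sin)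
    qed
  qed
  finally show "(\<integral>t. ln (cmod (1 - cis t * v)) \<partial>Th) = 0" by simp
qed


lemma int_ln1sqrt: "((\<lambda>t. ln (1 + sqrt t)) has_integral 1/2) {0..1::real}"
proof -
  define F where "F t = (t - 1) * ln (1 + sqrt t) - t / 2 + sqrt t" for t :: real
  have "((\<lambda>t. ln (1 + sqrt t)) has_integral (F 1 - F 0)) {0..1::real}"
  proof (rule fundamental_theorem_of_calculus_interior)
    show "0 \<le> (1::real)" by simp
    have nz: "\<And>x::real. 0 \<le> x \<Longrightarrow> 1 + sqrt x \<noteq> 0" by (smt (verit) real_sqrt_ge_zero)
    show "continuous_on {0..1} F" unfolding F_def
      by (intro continuous_intros) (auto dest: nz)
    fix t :: real assume t: "t \<in> {0<..<1}"
    then have sp: "sqrt t > 0" by simp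
    have t0: "0 < t" using t by simp
    define S' where "S' = inverse (sqrt t) / 2"
    have dS: "(sqrt has_real_derivative S') (at t)" unfolding S'_def by (rule DERIV_real_sqrt[OF t0])
    have p1: "0 < 1 + sqrt t" using sp by linarith
    have dL: "((\<lambda>x. ln (1 + sqrt x)) has_real_derivative (1 / (1 + sqrt t)) * S') (at t)"
    proof -
      have d1: "((\<lambda>x. 1 + sqrt x) has_real_derivative S') (at t)"
        using DERIV_add[OF DERIV_const[of 1] dS] by simp
      show ?thesis using DERIV_chain2[OF DERIV_ln_divide[OF p1] d1] by simp
    qed
    have dlin: "((\<lambda>x. x - 1) has_real_derivative 1) (at t)"
      using DERIV_diff[OF DERIV_ident DERIV_const[of 1]] by simp
    have dm: "((\<lambda>x. (x - 1) * ln (1 + sqrt x)) has_real_derivative 1 * ln (1 + sqrt t) + ((1 / (1 + sqrt t)) * S') * (t - 1)) (at t)"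
      by (rule DERIV_mult[OF dlin dL])
    have dh: "((\<lambda>x. x / 2) has_real_derivative 1 / 2) (at t)"
      by (rule DERIV_cdivide[OF DERIV_ident])
    have dF: "(F has_real_derivative (1 * ln (1 + sqrt t) + ((1 / (1 + sqrt t)) * S') * (t - 1)) - 1/2 + S') (at t)"
      unfolding F_def by (rule DERIV_add[OF DERIV_diff[OF dm dh] dS])
    moreover have "(1 * ln (1 + sqrt t) + ((1 / (1 + sqrt t)) * S') * (t - 1)) - 1/2 + S' = ln (1 + sqrt t)"
    proof -
      have tt: "t = sqrt t * sqrt t" using t by simp
      have "t - 1 = (sqrt t - 1) * (1 + sqrt t)" by (subst tt) (simp add: algebra_simps)
      then have "((1 / (1 + sqrt t)) * S') * (t - 1) = (sqrt t - 1) * S'"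
        using p1 by (simp add: field_simps)
      moreover have "sqrt t * S' = 1/2" unfolding S'_def using sp by simp
      ultimately show ?thesis by (simp add: algebra_simps)
    qed
    ultimately have "(F has_real_derivative ln (1 + sqrt t)) (at t)" by (rule DERIV_cong)
    then show "(F has_vector_derivative ln (1 + sqrt t)) (at t)"
      by (simp add: has_real_derivative_iff_has_vector_derivative)
  qed
  moreover have "F 1 - F 0 = 1/2" by (simp add: F_def)
  ultimately show ?thesis by simp
qed

lemma int_1mt_pow: "((\<lambda>t. (1 - t)^n) has_integral 1 / (real n + 1)) {0..1::real}"
proof -
  define G where "G t = - ((1 - t)^(Suc n)) / (real n + 1)" for t :: real
  have nz: "real n + 1 \<noteq> 0" by linarith
  have "((\<lambda>t. (1 - t)^n) has_integral (G 1 - G 0)) {0..1::real}"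
  proof (rule fundamental_theorem_of_calculus)
    show "0 \<le> (1::real)" by simp
    fix x :: real assume "x \<in> {0..1}"
    have d1: "((\<lambda>t. 1 - t) has_real_derivative -1) (at x within {0..1})"
      using DERIV_diff[OF DERIV_const[of 1] DERIV_ident] by simp
    have d2: "((\<lambda>t. (1 - t)^(Suc n)) has_real_derivative real (Suc n) * (1 - x)^n * (-1)) (at x within {0..1})"
      using DERIV_power[OF d1, of "Suc n"] by simp
    have "(G has_real_derivative - (real (Suc n) * (1 - x)^n * (-1)) / (real n + 1)) (at x within {0..1})"
      unfolding G_def by (intro DERIV_cdivide DERIV_minus d2)
    moreover have "- (real (Suc n) * (1 - x)^n * (-1)) / (real n + 1) = (1 - x)^n"
      using nz by (simp add: add.commute)
    ultimately have "(G has_real_derivative (1 - x)^n) (at x within {0..1})" by (rule DERIV_cong)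
    then show "(G has_vector_derivative (1 - x)^n) (at x within {0..1})"
      by (simp add: has_real_derivative_iff_has_vector_derivative)
  qed
  moreover have "G 1 - G 0 = 1 / (real n + 1)" by (simp add: G_def)
  ultimately show ?thesis by simp
qed

definition rt :: "real \<Rightarrow> quat" where "rt t = (cos t, sin t, 0, 0)"
lemma rt_S3: "rt t \<in> S3" by (simp add: rt_def S3_def norm_Pair)
lemma rt_meas[measurable]: "rt \<in> borel_measurable borel"
  unfolding rt_def by (intro borel_measurable_continuous_onI continuous_intros continuous_on_Pair)
lemma snd_Th[measurable]: "snd \<in> borel_measurable (M \<Otimes>\<^sub>M Th)"
  by (rule measurable_compose[OF measurable_snd Th_meas]) simp

context haar3 begin

lemma null_from_moments:
  fixes h :: "quat \<Rightarrow> real"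
  assumes h[measurable]: "h \<in> borel_measurable borel" and rng: "\<And>x. x \<in> space \<nu> \<Longrightarrow> 0 \<le> h x \<and> h x \<le> 1"
    and mom: "\<And>n. (\<integral>x. (h x)^n \<partial>\<nu>) = 1 / (real n + 1)"
  shows "emeasure \<nu> {x \<in> space \<nu>. h x = 1} = 0"
proof -
  have ihn: "integrable \<nu> (\<lambda>x. (h x)^n)" for n
    by (rule integrable_const_bound[where B=1]) (auto intro!: AE_I2 simp: rng power_le_one)
  have le: "measure \<nu> {x \<in> space \<nu>. h x = 1} \<le> 1 / (real n + 1)" for n
  proof -
    have "measure \<nu> {x \<in> space \<nu>. h x = 1} = (\<integral>x. indicator {x \<in> space \<nu>. h x = 1} x \<partial>\<nu>)"
      by simp
    also have "\<dots> \<le> (\<integral>x. (h x)^n \<partial>\<nu>)"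
    proof (rule integral_mono)
      show "integrable \<nu> (\<lambda>x. indicator {x \<in> space \<nu>. h x = 1} x :: real)"
        by (rule integrable_const_bound[where B=1]) auto
    qed (auto simp: ihn indicator_def rng)
    finally show ?thesis using mom by simp
  qed
  have "measure \<nu> {x \<in> space \<nu>. h x = 1} = 0"
  proof (rule ccontr)
    assume "measure \<nu> {x \<in> space \<nu>. h x = 1} \<noteq> 0"
    then have pos: "measure \<nu> {x \<in> space \<nu>. h x = 1} > 0" by (simp add: zero_less_measure_iff)
    obtain n :: nat where "1 / measure \<nu> {x \<in> space \<nu>. h x = 1} < real n" using reals_Archimedean2 by blast
    then have "1 / (real n + 1) < measure \<nu> {x \<in> space \<nu>. h x = 1}" using pos
      by (simp add: field_simps)
    with le[of n] show False by simp
  qed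
  then show ?thesis by (simp add: emeasure_eq_measure)
qed

lemma s_null1: "emeasure \<nu> {x \<in> space \<nu>. s x = 1} = 0"
  by (rule null_from_moments) (auto simp: s_range s_moment)

lemma s_null0: "emeasure \<nu> {x \<in> space \<nu>. s x = 0} = 0"
proof -
  have "emeasure \<nu> {x \<in> space \<nu>. 1 - s x = 1} = 0"
  proof (rule null_from_moments)
    fix n
    have "(\<integral>x. (1 - s x)^n \<partial>\<nu>) = integral {0..1} (\<lambda>t. (1 - t)^n)"
      by (rule weierstrass_expect) (auto intro!: continuous_intros)
    also have "\<dots> = 1 / (real n + 1)" using int_1mt_pow by (rule integral_unique)
    finally show "(\<integral>x. (1 - s x)^n \<partial>\<nu>) = 1 / (real n + 1)" .
  qed (auto simp: s_range)
  then show ?thesis by simp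
qed

lemma AE_s_pos: "AE x in \<nu>. s x > 0"
proof -
  have "AE x in \<nu>. s x \<noteq> 0"
    using s_null0 by (intro AE_I[where N="{x \<in> space \<nu>. s x = 0}"]) auto
  then show ?thesis using AE_space
  proof eventually_elim
    case (elim x) then show ?case using s_range[of x] by auto
  qed
qed

lemma AE_s_lt1: "AE x in \<nu>. s x < 1"
proof -
  have "AE x in \<nu>. s x \<noteq> 1"
    using s_null1 by (intro AE_I[where N="{x \<in> space \<nu>. s x = 1}"]) auto
  then show ?thesis using AE_space
  proof eventually_elim
    case (elim x) then show ?case using s_range[of x] by auto
  qed
qed

lemma fst_nu[measurable]: "fst \<in> borel_measurable (\<nu> \<Otimes>\<^sub>M M)"
  by (rule measurable_compose[OF measurable_fst ident_meas])

lemma circle_avg: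
  fixes F :: "quat \<Rightarrow> ennreal"
  assumes F[measurable]: "F \<in> borel_measurable borel"
  shows "(\<integral>\<^sup>+ z. (\<integral>\<^sup>+ t. F (qmult (rt t) z) \<partial>Th) \<partial>\<nu>) = ennreal (2*pi) * (\<integral>\<^sup>+ z. F z \<partial>\<nu>)"
proof -
  have sfT: "sigma_finite_measure Th"
    using Th_finite by (simp add: finite_measure_def)
  have "(\<integral>\<^sup>+ z. (\<integral>\<^sup>+ t. F (qmult (rt t) z) \<partial>Th) \<partial>\<nu>) = (\<integral>\<^sup>+ t. (\<integral>\<^sup>+ z. F (qmult (rt t) z) \<partial>\<nu>) \<partial>Th)"
    by (rule tonelli_swap[OF sf sfT]) measurable
  also have "\<dots> = (\<integral>\<^sup>+ t. (\<integral>\<^sup>+ z. F z \<partial>\<nu>) \<partial>Th)"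
    by (rule nn_integral_cong) (rule linv_nn[OF rt_S3 F])
  also have "\<dots> = ennreal (2*pi) * (\<integral>\<^sup>+ z. F z \<partial>\<nu>)"
    by (simp add: Th_emeasure mult.commute)
  finally show ?thesis .
qed

end

lemma circle_identity:
  fixes z0 z1 \<sigma> t :: real
  assumes w: "z0^2 + z1^2 = 1 - \<sigma>" and \<sigma>: "0 \<le> \<sigma>"
  defines "A \<equiv> 1 + sqrt \<sigma>"
  shows "2 - 2*(cos t*z0 - sin t*z1) = A * ((1 - (cos t * z0 - sin t * z1)/A)^2 + ((cos t * z1 + sin t * z0)/A)^2)"
proof -
  have A0: "A > 0" unfolding A_def using \<sigma> by (smt (verit) real_sqrt_ge_zero)
  have gen: "(c * z0 - d * z1)^2 + (c * z1 + d * z0)^2 = (c^2 + d^2) * (z0^2 + z1^2)" for c d :: real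
    by (simp add: algebra_simps power2_eq_square)
  have RI: "(cos t * z0 - sin t * z1)^2 + (cos t * z1 + sin t * z0)^2 = z0^2 + z1^2"
    using gen[of "cos t" "sin t"] by simp
  have AA: "A * A + (1 - \<sigma>) = 2 * A"
    unfolding A_def using \<sigma> by (simp add: algebra_simps)
  define R where "R = cos t * z0 - sin t * z1"
  define I where "I = cos t * z1 + sin t * z0"
  have "A * ((1 - R/A)^2 + (I/A)^2) = A - 2 * R + (R^2 + I^2) / A"
    using A0 by (simp add: field_simps power2_eq_square)
  also have "R^2 + I^2 = 1 - \<sigma>" using RI w unfolding R_def I_def by simp
  also have "A - 2 * R + (1 - \<sigma>) / A = 2 - 2 * R"
  proof -
    have "(1 - \<sigma>) / A = 2 - A" using AA A0 by (simp add: field_simps)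
    then show ?thesis by simp
  qed
  finally show ?thesis unfolding R_def I_def by simp
qed

lemma norm_qone_minus_sq: "norm x = 1 \<Longrightarrow> (norm (qone - x))^2 = 2 - 2 * q0 x"
proof -
  assume "norm x = 1"
  then have "(q0 x)^2 + (q1 x)^2 + (q2 x)^2 + (q3 x)^2 = 1" using norm_quat_sq[of x] by simp
  then show ?thesis unfolding norm_quat_sq[of "qone - x"] by (simp add: algebra_simps power2_eq_square)
qed

lemma circle_log:
  assumes z: "norm z = 1" and sp: "0 < s z"
  shows "integrable Th (\<lambda>t. ln (norm (qone - qmult (rt t) z)))"
    "(\<integral>t. ln (norm (qone - qmult (rt t) z)) \<partial>Th) = pi * ln (1 + sqrt (s z))"
proof -
  define A where "A = 1 + sqrt (s z)"
  have A0: "A > 0" unfolding A_def using sp by (smt (verit) real_sqrt_ge_zero)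
  define v where "v = Complex (q0 z / A) (q1 z / A)"
  have w: "(q0 z)^2 + (q1 z)^2 = 1 - s z" using z norm_quat_sq[of z] unfolding s_def by simp
  have vlt: "cmod v < 1"
  proof -
    have "(cmod v)^2 = ((q0 z)^2 + (q1 z)^2) / A^2" unfolding v_def cmod_power2 by (simp add: power_divide add_divide_distrib)
    also have "\<dots> < 1"
    proof -
      have "A \<ge> 1" unfolding A_def using sp by simp
      then have "1 \<le> A^2" by (simp add: one_le_power)
      moreover have "(q0 z)^2 + (q1 z)^2 < 1" using w sp by simp
      ultimately show ?thesis using A0 by (simp add: divide_less_eq)
    qed
    finally show ?thesis by (simp add: power_less_one_iff abs_square_less_1)
  qed
  have pt: "ln (norm (qone - qmult (rt t) z)) = ln A / 2 + ln (cmod (1 - cis t * v))" for t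
  proof -
    have n1: "norm (qmult (rt t) z) = 1" using z rt_S3[of t] by (simp add: norm_qmult S3_def)
    have "(norm (qone - qmult (rt t) z))^2 = 2 - 2 * (cos t * q0 z - sin t * q1 z)"
      using norm_qone_minus_sq[OF n1] by (simp add: rt_def)
    also have "\<dots> = A * ((1 - (cos t * q0 z - sin t * q1 z)/A)^2 + ((cos t * q1 z + sin t * q0 z)/A)^2)"
      unfolding A_def by (rule circle_identity[OF w]) (use sp in simp)
    also have "(1 - (cos t * q0 z - sin t * q1 z)/A)^2 + ((cos t * q1 z + sin t * q0 z)/A)^2 = (cmod (1 - cis t * v))^2"
      unfolding cmod_power2 v_def by (simp add: cis.ctr algebra_simps diff_divide_distrib add_divide_distrib power2_eq_square)
    finally have sq: "(norm (qone - qmult (rt t) z))^2 = A * (cmod (1 - cis t * v))^2" .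
    have cpos: "cmod (1 - cis t * v) > 0"
    proof -
      have "cmod (cis t * v) < 1" using vlt by (simp add: norm_mult)
      then have "1 - cis t * v \<noteq> 0" by (metis eq_iff_diff_eq_0 norm_one order_less_irrefl)
      then show ?thesis by simp
    qed
    have "norm (qone - qmult (rt t) z) = sqrt (A * (cmod (1 - cis t * v))^2)"
      using sq by (metis norm_ge_zero real_sqrt_unique)
    also have "ln \<dots> = ln (A * (cmod (1 - cis t * v))^2) / 2" by (rule ln_sqrt) (use A0 in simp)
    also have "ln (A * (cmod (1 - cis t * v))^2) = ln A + 2 * ln (cmod (1 - cis t * v))"
      using A0 cpos by (simp add: ln_mult ln_realpow)
    finally show ?thesis by simp
  qed
  interpret finite_measure Th by (rule Th_finite)
  have j1: "integrable Th (\<lambda>t. ln (cmod (1 - cis t * v)))" by (rule jensen0(1)[OF vlt])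
  have j2: "(\<integral>t. ln (cmod (1 - cis t * v)) \<partial>Th) = 0" by (rule jensen0(2)[OF vlt])
  show "integrable Th (\<lambda>t. ln (norm (qone - qmult (rt t) z)))"
    unfolding pt by (intro Bochner_Integration.integrable_add j1) simp
  have "(\<integral>t. ln (norm (qone - qmult (rt t) z)) \<partial>Th) = (\<integral>t. ln A / 2 \<partial>Th) + (\<integral>t. ln (cmod (1 - cis t * v)) \<partial>Th)"
    unfolding pt by (intro Bochner_Integration.integral_add j1) simp
  also have "\<dots> = 2 * pi * (ln A / 2)" using j2 Th_emeasure by (simp add: measure_def)
  finally show "(\<integral>t. ln (norm (qone - qmult (rt t) z)) \<partial>Th) = pi * ln (1 + sqrt (s z))"
    by (simp add: A_def)
qed


lemma norm_qone: "norm qone = 1" by (simp add: qone_def norm_Pair)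

lemma G_nonneg: "norm z = 1 \<Longrightarrow> 0 \<le> ln 2 - ln (norm (qone - z))"
proof -
  assume z: "norm z = 1"
  have "norm (qone - z) \<le> 2" using norm_triangle_ineq4[of qone z] z norm_qone by simp
  then show ?thesis
    by (cases "norm (qone - z) = 0") (auto simp: ln_le_cancel_iff)
qed

lemma ln1sqrt_le: "0 \<le> t \<Longrightarrow> t \<le> 1 \<Longrightarrow> ln (1 + sqrt t) \<le> ln 2"
proof -
  assume "0 \<le> t" "t \<le> 1"
  then have "sqrt t \<le> 1" by simp
  moreover have "0 \<le> sqrt t" using \<open>0 \<le> t\<close> by simp
  moreover have "0 < 1 + sqrt t" using \<open>0 \<le> sqrt t\<close> by linarith
  ultimately show ?thesis by (subst ln_le_cancel_iff) auto
qed

context haar3 begin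

lemma E_G1: "(\<integral>\<^sup>+ z. ennreal (ln 2 - ln (norm (qone - z))) \<partial>\<nu>) = ennreal (ln 2 - 1/4)"
proof -
  interpret Thf: finite_measure Th by (rule Th_finite)
  define G where "G z = ln 2 - ln (norm (qone - z))" for z
  have Gm[measurable]: "G \<in> borel_measurable borel" unfolding G_def by measurable
  have Gnn: "norm z = 1 \<Longrightarrow> 0 \<le> G z" for z unfolding G_def by (rule G_nonneg)
  have inner: "(\<integral>\<^sup>+ t. ennreal (G (qmult (rt t) z)) \<partial>Th) = ennreal (2*pi * ln 2 - pi * ln (1 + sqrt (s z)))"
    if z: "z \<in> space \<nu>" "0 < s z" for z
  proof -
    have nz: "norm z = 1" using z S3_norm by blast
    have ci: "integrable Th (\<lambda>t. ln (norm (qone - qmult (rt t) z)))" by (rule circle_log(1)[OF nz z(2)])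
    have cv: "(\<integral>t. ln (norm (qone - qmult (rt t) z)) \<partial>Th) = pi * ln (1 + sqrt (s z))" by (rule circle_log(2)[OF nz z(2)])
    have iG: "integrable Th (\<lambda>t. G (qmult (rt t) z))"
      unfolding G_def by (intro Bochner_Integration.integrable_diff ci) simp
    have "(\<integral>\<^sup>+ t. ennreal (G (qmult (rt t) z)) \<partial>Th) = ennreal (\<integral>t. G (qmult (rt t) z) \<partial>Th)"
    proof (rule nn_integral_eq_integral[OF iG])
      show "AE t in Th. 0 \<le> G (qmult (rt t) z)"
        using rt_S3 nz by (intro AE_I2 Gnn) (simp add: S3_def norm_qmult)
    qed
    also have "(\<integral>t. G (qmult (rt t) z) \<partial>Th) = 2*pi * ln 2 - pi * ln (1 + sqrt (s z))"
      unfolding G_def using ci cv Th_emeasure by (simp add: measure_def)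
    finally show ?thesis .
  qed
  have "ennreal (2*pi) * (\<integral>\<^sup>+ z. ennreal (G z) \<partial>\<nu>) = (\<integral>\<^sup>+ z. (\<integral>\<^sup>+ t. ennreal (G (qmult (rt t) z)) \<partial>Th) \<partial>\<nu>)"
    by (rule circle_avg[symmetric]) measurable
  also have "\<dots> = (\<integral>\<^sup>+ z. ennreal (2*pi * ln 2 - pi * ln (1 + sqrt (s z))) \<partial>\<nu>)"
    by (rule nn_integral_cong_AE) (use AE_s_pos AE_space in \<open>eventually_elim, simp add: inner\<close>)
  also have "\<dots> = ennreal (\<integral>z. 2*pi * ln 2 - pi * ln (1 + sqrt (s z)) \<partial>\<nu>)"
  proof (rule nn_integral_eq_integral)
    have wi: "integrable \<nu> (\<lambda>z. ln (1 + sqrt (s z)))"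
      by (rule weierstrass_expect(1)) (measurable, auto intro!: continuous_intros dest: real_sqrt_ge_zero[of _] 
          simp: add_nonneg_eq_0_iff)
    show "integrable \<nu> (\<lambda>z. 2*pi * ln 2 - pi * ln (1 + sqrt (s z)))"
      using wi by simp
    show "AE z in \<nu>. 0 \<le> 2*pi * ln 2 - pi * ln (1 + sqrt (s z))"
    proof (rule AE_I2)
      fix z assume "z \<in> space \<nu>"
      then have "ln (1 + sqrt (s z)) \<le> ln 2" using s_range ln1sqrt_le by blast
      then have "pi * ln (1 + sqrt (s z)) \<le> pi * ln 2" by simp
      moreover have "0 \<le> pi * ln 2" by simp
      ultimately show "0 \<le> 2*pi * ln 2 - pi * ln (1 + sqrt (s z))" by linarith
    qed
  qed
  also have "(\<integral>z. 2*pi * ln 2 - pi * ln (1 + sqrt (s z)) \<partial>\<nu>) = 2*pi * ln 2 - pi * (1/2)"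
  proof -
    have wi: "integrable \<nu> (\<lambda>z. ln (1 + sqrt (s z)))"
      by (rule weierstrass_expect(1)) (measurable, auto intro!: continuous_intros dest: real_sqrt_ge_zero[of _] 
          simp: add_nonneg_eq_0_iff)
    have we: "(\<integral>z. ln (1 + sqrt (s z)) \<partial>\<nu>) = integral {0..1} (\<lambda>t. ln (1 + sqrt t))"
      by (rule weierstrass_expect(2)) (measurable, auto intro!: continuous_intros dest: real_sqrt_ge_zero[of _] 
          simp: add_nonneg_eq_0_iff)
    have "integral {0..1} (\<lambda>t. ln (1 + sqrt t)) = 1/2" using int_ln1sqrt by (rule integral_unique)
    then show ?thesis using wi we by (simp add: prob_space)
  qed
  also have "2*pi * ln 2 - pi * (1/2) = 2*pi * (ln 2 - 1/4)" by (simp add: algebra_simps)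
  also have "ennreal (2*pi * (ln 2 - 1/4)) = ennreal (2*pi) * ennreal (ln 2 - 1/4)"
    using ln2_ge_two_thirds by (intro ennreal_mult) auto
  finally have "ennreal (2*pi) * (\<integral>\<^sup>+ z. ennreal (G z) \<partial>\<nu>) = ennreal (2*pi) * ennreal (ln 2 - 1/4)" .
  then show ?thesis unfolding G_def by (subst (asm) ennreal_mult_cancel_left) auto
qed

lemma E_neglog: "(\<integral>\<^sup>+ z. ennreal (- ln (1 - s z)) \<partial>\<nu>) = 1"
proof -
  define f where "f n z = (s z)^(Suc n) / real (Suc n)" for n z
  have ser: "- ln (1 - s z) = (\<Sum>n. f n z)" if "0 \<le> s z" "s z < 1" for z
  proof -
    have "ln (1 - s z) = (\<Sum>n. (-1)^n * (1 / real (n + 1)) * ((1 - s z) - 1)^(Suc n))"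
      by (rule ln_series) (use that in auto)
    also have "(\<lambda>n. (-1)^n * (1 / real (n + 1)) * ((1 - s z) - 1)^(Suc n)) = (\<lambda>n. - f n z)"
      by (rule ext) (simp add: f_def power_minus' field_simps)
    finally have "ln (1 - s z) = (\<Sum>n. - f n z)" .
    moreover have "summable (\<lambda>n. f n z)"
    proof -
      have "summable (\<lambda>n. (s z)^n)" by (rule summable_geometric) (use that in auto)
      then have sg: "summable (\<lambda>n. (s z)^(Suc n))" by (simp add: summable_Suc_iff)
      have nb: "norm (f n z) \<le> (s z)^(Suc n)" for n
      proof -
        have p: "0 \<le> (s z)^(Suc n)" using that by simp
        have "(s z)^(Suc n) * 1 \<le> (s z)^(Suc n) * real (Suc n)" by (rule mult_left_mono) (use p in auto)
        then have "(s z)^(Suc n) / real (Suc n) \<le> (s z)^(Suc n)" by (simp add: divide_le_eq)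
        then show ?thesis using p by (simp add: f_def)
      qed
      show ?thesis by (rule summable_comparison_test'[OF sg, of 0]) (rule nb)
    qed
    ultimately show ?thesis by (simp add: suminf_minus)
  qed
  have fnn: "0 \<le> f n z" if "0 \<le> s z" for n z using that by (simp add: f_def)
  have fsum: "summable (\<lambda>n. f n z)" if "0 \<le> s z" "s z < 1" for z
  proof -
    have "summable (\<lambda>n. (s z)^n)" by (rule summable_geometric) (use that in auto)
    then have sg: "summable (\<lambda>n. (s z)^(Suc n))" by (simp add: summable_Suc_iff)
    have nb: "norm (f n z) \<le> (s z)^(Suc n)" for n
    proof -
      have p: "0 \<le> (s z)^(Suc n)" using that by simp
      have "(s z)^(Suc n) * 1 \<le> (s z)^(Suc n) * real (Suc n)" by (rule mult_left_mono) (use p in auto)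
      then have "(s z)^(Suc n) / real (Suc n) \<le> (s z)^(Suc n)" by (simp add: divide_le_eq)
      then show ?thesis using p by (simp add: f_def)
    qed
    show ?thesis by (rule summable_comparison_test'[OF sg, of 0]) (rule nb)
  qed
  have fm[measurable]: "(\<lambda>z. f n z) \<in> borel_measurable borel" for n unfolding f_def by measurable
  have "(\<integral>\<^sup>+ z. ennreal (- ln (1 - s z)) \<partial>\<nu>) = (\<integral>\<^sup>+ z. (\<Sum>n. ennreal (f n z)) \<partial>\<nu>)"
  proof (rule nn_integral_cong_AE)
    show "AE z in \<nu>. ennreal (- ln (1 - s z)) = (\<Sum>n. ennreal (f n z))"
      using AE_s_lt1 AE_space
    proof eventually_elim
      case (elim z)
      then have z: "0 \<le> s z" "s z < 1" using s_range by auto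
      show ?case unfolding ser[OF z] by (rule suminf_ennreal2[symmetric]) (use z fnn fsum in auto)
    qed
  qed
  also have "\<dots> = (\<Sum>n. (\<integral>\<^sup>+ z. ennreal (f n z) \<partial>\<nu>))"
    by (rule nn_integral_suminf) measurable
  also have "(\<lambda>n. (\<integral>\<^sup>+ z. ennreal (f n z) \<partial>\<nu>)) = (\<lambda>n. ennreal (1 / real (Suc n) - 1 / real (Suc (Suc n))))"
  proof
    fix n
    have "(\<integral>\<^sup>+ z. ennreal (f n z) \<partial>\<nu>) = ennreal (\<integral>z. f n z \<partial>\<nu>)"
    proof (rule nn_integral_eq_integral)
      show "integrable \<nu> (\<lambda>z. f n z)"
        by (rule Bochner_Integration.integrable_cong[THEN iffD2, OF refl _ int_s_pow[of "1 / real (Suc n)" "Suc n"]]) (simp add: f_def)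
    qed (auto simp: f_def intro!: AE_I2 simp: s_range)
    also have "(\<integral>z. f n z \<partial>\<nu>) = 1 / real (Suc n) - 1 / real (Suc (Suc n))"
    proof -
      have "(\<integral>z. f n z \<partial>\<nu>) = (\<integral>z. (s z)^(Suc n) \<partial>\<nu>) / real (Suc n)"
        by (simp only: f_def integral_divide_zero)
      also have "\<dots> = (1 / (real (Suc n) + 1)) / real (Suc n)" by (simp only: s_moment)
      also have "\<dots> = 1 / real (Suc n) - 1 / real (Suc (Suc n))" by (simp add: field_simps)
      finally show ?thesis .
    qed
    finally show "(\<integral>\<^sup>+ z. ennreal (f n z) \<partial>\<nu>) = ennreal (1 / real (Suc n) - 1 / real (Suc (Suc n)))" .
  qed
  also have "(\<Sum>n. ennreal (1 / real (Suc n) - 1 / real (Suc (Suc n)))) = ennreal (\<Sum>n. 1 / real (Suc n) - 1 / real (Suc (Suc n)))"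
  proof (rule suminf_ennreal2)
    show "0 \<le> 1 / real (Suc n) - 1 / real (Suc (Suc n))" for n by (simp add: frac_le)
    have "(\<lambda>n. 1 / real (Suc n) - 1 / real (Suc (Suc n))) sums (1 / real (Suc 0) - 0)"
      by (rule telescope_sums'[where f="\<lambda>n. 1 / real (Suc n)"]) (use LIMSEQ_inverse_real_of_nat in \<open>simp add: inverse_eq_divide\<close>)
    then show "summable (\<lambda>n. 1 / real (Suc n) - 1 / real (Suc (Suc n)))" by (rule sums_summable)
  qed
  also have "(\<Sum>n. 1 / real (Suc n) - 1 / real (Suc (Suc n))) = 1"
  proof -
    have "(\<lambda>n. 1 / real (Suc n) - 1 / real (Suc (Suc n))) sums (1 / real (Suc 0) - 0)"
      by (rule telescope_sums'[where f="\<lambda>n. 1 / real (Suc n)"]) (use LIMSEQ_inverse_real_of_nat in \<open>simp add: inverse_eq_divide\<close>)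
    then show ?thesis by (simp add: sums_iff)
  qed
  finally show ?thesis by simp
qed

end

lemma qmult_scaleR: "qmult (r *\<^sub>R x) y = r *\<^sub>R qmult x y" "qmult x (r *\<^sub>R y) = r *\<^sub>R qmult x y"
  by (rule quat_eqI; simp add: algebra_simps)+
lemma qc_scaleR: "qc (r *\<^sub>R x) = r *\<^sub>R qc x" by (rule quat_eqI; simp)

lemma conj_exists:
  assumes u0: "q0 u = 0" and un: "norm u = 1"
  shows "\<exists>a\<in>S3. qmult a (qmult u (qc a)) = e1"
proof (cases "qone - qmult e1 u = 0")
  case True
  then have "qmult e1 u = qone" by simp
  then have h: "q0 (qmult e1 u) = 1" "q1 (qmult e1 u) = 0" "q2 (qmult e1 u) = 0" "q3 (qmult e1 u) = 0" by simp_all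
  then have "u = (0, -1, 0, 0)"
    by (intro quat_eqI) (simp_all add: e1_def)
  moreover have "qmult e2 (qmult (0, -1, 0, 0) (qc e2)) = e1" by (rule quat_eqI) (simp_all add: e2_def e1_def)
  moreover have "e2 \<in> S3" by (simp add: S3_def)
  ultimately show ?thesis by blast
next
  case False
  define b where "b = qone - qmult e1 u"
  have bn: "norm b \<noteq> 0" using False by (simp add: b_def)
  have uu: "(q1 u)^2 + (q2 u)^2 + (q3 u)^2 = 1" using un norm_quat_sq[of u] u0 by simp
  have bu: "qmult b u = qmult e1 b"
    unfolding b_def by (rule quat_eqI) (use uu u0 in \<open>simp_all add: e1_def algebra_simps power2_eq_square\<close>)
  have bb: "qmult b (qc b) = ((norm b)^2, 0, 0, 0)" by (rule qmult_qc)
  define a where "a = (1 / norm b) *\<^sub>R b"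
  have aS: "a \<in> S3" using bn by (simp add: a_def S3_def)
  have "qmult a (qmult u (qc a)) = (1 / norm b)^2 *\<^sub>R qmult b (qmult u (qc b))"
    by (simp add: a_def qmult_scaleR qc_scaleR power2_eq_square)
  also have "qmult b (qmult u (qc b)) = qmult e1 (qmult b (qc b))"
    by (simp add: qmult_assoc[symmetric] bu)
  also have "\<dots> = (norm b)^2 *\<^sub>R e1" unfolding bb by (rule quat_eqI) (simp_all add: e1_def)
  also have "(1 / norm b)^2 *\<^sub>R ((norm b)^2 *\<^sub>R e1) = e1" using bn by (simp add: power_divide)
  finally have "qmult a (qmult u (qc a)) = e1" .
  with aS show ?thesis by blast
qed

lemma inner_conj: "a \<in> S3 \<Longrightarrow> inner (qmult a (qmult x (qc a))) (qmult a (qmult y (qc a))) = inner x y"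
  by (simp add: inner_qmult_left inner_qmult_right qmult_assoc[symmetric] S3_def)

lemma q0_conj: "a \<in> S3 \<Longrightarrow> q0 (qmult a (qmult x (qc a))) = q0 x"
proof -
  assume a: "a \<in> S3"
  have "qmult a (qmult qone (qc a)) = qone" using a by (simp add: qmult_qc_S3)
  then have "q0 (qmult a (qmult x (qc a))) = inner (qmult a (qmult x (qc a))) (qmult a (qmult qone (qc a)))"
    by (simp add: inner_qone)
  also have "\<dots> = inner x qone" by (rule inner_conj[OF a])
  finally show ?thesis by (simp add: inner_qone)
qed

definition V :: "quat \<Rightarrow> real" where "V z = (q1 z)^2 + (q2 z)^2 + (q3 z)^2"
definition PV :: "quat \<Rightarrow> quat \<Rightarrow> real" where "PV x z = q1 x * q1 z + q2 x * q2 z + q3 x * q3 z"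
definition Q2 :: "quat \<Rightarrow> quat \<Rightarrow> real" where "Q2 x z = (q0 x)^2 + (PV x z)^2 / V z"

lemma Q2_conj:
  assumes V: "V z > 0"
  obtains a where "a \<in> S3" "\<And>x. Q2 x z = (q0 (qmult a (qmult x (qc a))))^2 + (q1 (qmult a (qmult x (qc a))))^2"
proof -
  define u where "u = (1 / sqrt (V z)) *\<^sub>R ((0::real), q1 z, q2 z, q3 z)"
  have u0: "q0 u = 0" by (simp add: u_def)
  have un: "norm u = 1"
  proof -
    have "(norm u)^2 = ((q1 z)^2 + (q2 z)^2 + (q3 z)^2) / V z" unfolding norm_quat_sq u_def
      using V by (simp add: power_mult_distrib power_divide add_divide_distrib)
    then have "(norm u)^2 = 1" using V by (simp add: V_def)
    then show ?thesis using norm_ge_zero[of u] by (auto simp: power2_eq_1_iff)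
  qed
  obtain a where aS: "a \<in> S3" and au: "qmult a (qmult u (qc a)) = e1" using conj_exists[OF u0 un] by blast
  show ?thesis
  proof (rule that[OF aS])
    fix x
    have "q1 (qmult a (qmult x (qc a))) = inner (qmult a (qmult x (qc a))) (qmult a (qmult u (qc a)))"
      by (simp add: au)
    also have "\<dots> = inner x u" by (rule inner_conj[OF aS])
    also have "\<dots> = PV x z / sqrt (V z)" by (simp add: inner_quat u_def PV_def add_divide_distrib)
    finally have e1: "(q1 (qmult a (qmult x (qc a))))^2 = (PV x z)^2 / V z"
      using V by (simp add: power_divide del: q_comp_qmult)
    have e0: "q0 (qmult a (qmult x (qc a))) = q0 x" by (rule q0_conj[OF aS])
    show "Q2 x z = (q0 (qmult a (qmult x (qc a))))^2 + (q1 (qmult a (qmult x (qc a))))^2"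
      by (simp only: Q2_def e0 e1)
  qed
qed


context haar3 begin

lemma conj_nn:
  assumes a: "a \<in> S3" and f[measurable]: "f \<in> borel_measurable borel"
  shows "(\<integral>\<^sup>+ x. f (qmult a (qmult x (qc a))) \<partial>\<nu>) = (\<integral>\<^sup>+ x. f x \<partial>\<nu>)"
proof -
  have "(\<integral>\<^sup>+ x. f (qmult a (qmult x (qc a))) \<partial>\<nu>) = (\<integral>\<^sup>+ x. (\<lambda>y. f (qmult y (qc a))) (qmult a x) \<partial>\<nu>)"
    by (simp add: qmult_assoc)
  also have "\<dots> = (\<integral>\<^sup>+ x. f (qmult x (qc a)) \<partial>\<nu>)" by (rule linv_nn[OF a]) measurable
  also have "\<dots> = (\<integral>\<^sup>+ x. f x \<partial>\<nu>)" by (rule rinv_nn[OF S3_qc[OF a] f])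
  finally show ?thesis .
qed

lemma E_Q2:
  assumes V: "V z > 0"
  shows "(\<integral>\<^sup>+ x. ennreal (- ln (Q2 x z)) \<partial>\<nu>) = 1"
proof -
  obtain a where aS: "a \<in> S3" and Qa: "\<And>x. Q2 x z = (q0 (qmult a (qmult x (qc a))))^2 + (q1 (qmult a (qmult x (qc a))))^2"
    using Q2_conj[OF V] by blast
  have "(\<integral>\<^sup>+ x. ennreal (- ln (Q2 x z)) \<partial>\<nu>) = (\<integral>\<^sup>+ x. (\<lambda>y. ennreal (- ln (1 - s y))) (qmult a (qmult x (qc a))) \<partial>\<nu>)"
  proof (rule nn_integral_cong)
    fix x assume x: "x \<in> space \<nu>"
    have "norm (qmult a (qmult x (qc a))) = 1" using aS x S3_norm by (simp add: norm_qmult S3_def)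
    then have "(q0 (qmult a (qmult x (qc a))))^2 + (q1 (qmult a (qmult x (qc a))))^2 = 1 - s (qmult a (qmult x (qc a)))"
      using norm_quat_sq[of "qmult a (qmult x (qc a))"] unfolding s_def by simp
    then show "ennreal (- ln (Q2 x z)) = (\<lambda>y. ennreal (- ln (1 - s y))) (qmult a (qmult x (qc a)))"
      by (simp add: Qa)
  qed
  also have "\<dots> = (\<integral>\<^sup>+ x. ennreal (- ln (1 - s x)) \<partial>\<nu>)" by (rule conj_nn[OF aS]) measurable
  also have "\<dots> = 1" by (rule E_neglog)
  finally show ?thesis .
qed

lemma AE_Q2_pos:
  assumes V: "V z > 0"
  shows "AE x in \<nu>. Q2 x z > 0"
proof -
  obtain a where aS: "a \<in> S3" and Qa: "\<And>x. Q2 x z = (q0 (qmult a (qmult x (qc a))))^2 + (q1 (qmult a (qmult x (qc a))))^2"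
    using Q2_conj[OF V] by blast
  have "emeasure \<nu> {x \<in> space \<nu>. s (qmult a (qmult x (qc a))) = 1} = (\<integral>\<^sup>+ x. indicator {x \<in> space \<nu>. s (qmult a (qmult x (qc a))) = 1} x \<partial>\<nu>)"
    by (rule nn_integral_indicator[symmetric]) measurable
  also have "\<dots> = (\<integral>\<^sup>+ x. indicator {y. s y = 1} (qmult a (qmult x (qc a))) \<partial>\<nu>)"
    by (rule nn_integral_cong) (simp add: indicator_def)
  also have "\<dots> = (\<integral>\<^sup>+ x. indicator {y. s y = 1} x \<partial>\<nu>)" by (rule conj_nn[OF aS]) measurable
  also have "\<dots> = (\<integral>\<^sup>+ x. indicator {x \<in> space \<nu>. s x = 1} x \<partial>\<nu>)"
    by (rule nn_integral_cong) (simp add: indicator_def)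
  also have "\<dots> = emeasure \<nu> {x \<in> space \<nu>. s x = 1}"
    by (rule nn_integral_indicator) measurable
  also have "\<dots> = 0" by (rule s_null1)
  finally have null: "emeasure \<nu> {x \<in> space \<nu>. s (qmult a (qmult x (qc a))) = 1} = 0" .
  have "AE x in \<nu>. s (qmult a (qmult x (qc a))) \<noteq> 1"
    using null by (intro AE_I[where N="{x \<in> space \<nu>. s (qmult a (qmult x (qc a))) = 1}"]) auto
  then show ?thesis using AE_space
  proof eventually_elim
    case (elim x)
    have "norm (qmult a (qmult x (qc a))) = 1" using aS elim S3_norm by (simp add: norm_qmult S3_def)
    then have "(q0 (qmult a (qmult x (qc a))))^2 + (q1 (qmult a (qmult x (qc a))))^2 = 1 - s (qmult a (qmult x (qc a)))"
      using norm_quat_sq[of "qmult a (qmult x (qc a))"] unfolding s_def by simp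
    moreover have "s (qmult a (qmult x (qc a))) \<le> 1"
      using s_range'[OF \<open>norm (qmult a (qmult x (qc a))) = 1\<close>] by simp
    ultimately show ?case using elim by (simp add: Qa)
  qed
qed

end

lemma N1:
  assumes x: "norm x = 1" and z: "norm z = 1"
  shows "(norm (qmult x x - qmult (qmult x z) (qmult x z)))^2 = 4 * ((q0 x)^2 * V z + (PV x z)^2)"
proof -
  define W where "W = qmult (qc z) x - qmult x z"
  have zz: "qmult z (qc z) = qone" using z by (simp add: qmult_qc_S3 S3_def)
  have "qmult x (qmult z W) = qmult x x - qmult (qmult x z) (qmult x z)"
  proof -
    have "qmult z W = qmult (qmult z (qc z)) x - qmult z (qmult x z)"
      unfolding W_def by (rule quat_eqI) (simp_all add: algebra_simps)
    also have "\<dots> = x - qmult z (qmult x z)" by (simp add: zz)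
    finally have "qmult x (qmult z W) = qmult x (x - qmult z (qmult x z))" by simp
    also have "\<dots> = qmult x x - qmult (qmult x z) (qmult x z)"
      by (rule quat_eqI) (simp_all add: algebra_simps)
    finally show ?thesis .
  qed
  then have "norm (qmult x x - qmult (qmult x z) (qmult x z)) = norm W"
    using x z by (metis norm_qmult mult_1)
  moreover have "(norm W)^2 = 4 * ((q0 x)^2 * V z + (PV x z)^2)"
    unfolding norm_quat_sq W_def V_def PV_def by (simp add: algebra_simps power2_eq_square)
  ultimately show ?thesis by simp
qed

lemma N2:
  assumes z: "norm z = 1"
  shows "(norm (qone - qmult z z))^2 = 4 * V z"
proof -
  have zz: "qmult z (qc z) = qone" using z by (simp add: qmult_qc_S3 S3_def)
  have "qone - qmult z z = qmult z (qc z - z)"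
  proof -
    have "qmult z (qc z - z) = qmult z (qc z) - qmult z z" by (rule quat_eqI) (simp_all add: algebra_simps)
    then show ?thesis by (simp add: zz)
  qed
  then have "norm (qone - qmult z z) = norm (qc z - z)" using z by (simp add: norm_qmult)
  moreover have "(norm (qc z - z))^2 = 4 * V z"
    unfolding norm_quat_sq V_def by (simp add: algebra_simps power2_eq_square)
  ultimately show ?thesis by simp
qed

lemma N3: "qone - qmult z z = qmult (qone - z) (qone + z)"
  by (rule quat_eqI) (simp_all add: algebra_simps)

lemma Q2_le1: "norm x = 1 \<Longrightarrow> V z > 0 \<Longrightarrow> Q2 x z \<le> 1"
proof -
  assume x: "norm x = 1" and V: "V z > 0"
  obtain a where aS: "a \<in> S3" and Qa: "\<And>x. Q2 x z = (q0 (qmult a (qmult x (qc a))))^2 + (q1 (qmult a (qmult x (qc a))))^2"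
    using Q2_conj[OF V] by blast
  have "norm (qmult a (qmult x (qc a))) = 1" using aS x by (simp add: norm_qmult S3_def)
  then have "(q0 (qmult a (qmult x (qc a))))^2 + (q1 (qmult a (qmult x (qc a))))^2 + (q2 (qmult a (qmult x (qc a))))^2 + (q3 (qmult a (qmult x (qc a))))^2 = 1"
    using norm_quat_sq[of "qmult a (qmult x (qc a))"] by (simp del: q_comp_qmult)
  moreover have "0 \<le> (q2 (qmult a (qmult x (qc a))))^2" "0 \<le> (q3 (qmult a (qmult x (qc a))))^2" by simp_all
  ultimately show ?thesis unfolding Qa by linarith
qed

lemma log_split:
  assumes x: "norm x = 1" and z: "norm z = 1" and V: "V z > 0" and Q: "Q2 x z > 0"
  shows "ln 4 - ln (norm (qmult x x - qmult (qmult x z) (qmult x z)))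
       = (ln 2 - ln (norm (qone - z))) + (ln 2 - ln (norm (qone + z))) + (1/2) * (- ln (Q2 x z))"
proof -
  have sq: "(norm (qmult x x - qmult (qmult x z) (qmult x z)))^2 = (norm (qone - qmult z z))^2 * Q2 x z"
    unfolding N1[OF x z] N2[OF z] Q2_def using V by (simp add: field_simps)
  have n12: "norm (qone - qmult z z) = norm (qone - z) * norm (qone + z)" by (simp add: N3 norm_qmult)
  have pos: "norm (qone - qmult z z) > 0"
  proof -
    have "(norm (qone - qmult z z))^2 > 0" using N2[OF z] V by simp
    then show ?thesis by (simp add: zero_less_power2)
  qed
  then have p1: "norm (qone - z) > 0" and p2: "norm (qone + z) > 0"
    using n12 by (auto simp: zero_less_mult_iff)
  have "norm (qmult x x - qmult (qmult x z) (qmult x z)) = norm (qone - qmult z z) * sqrt (Q2 x z)"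
  proof -
    have "norm (qmult x x - qmult (qmult x z) (qmult x z)) = sqrt ((norm (qmult x x - qmult (qmult x z) (qmult x z)))^2)"
      by simp
    also have "\<dots> = sqrt ((norm (qone - qmult z z))^2) * sqrt (Q2 x z)" unfolding sq by (rule real_sqrt_mult)
    also have "sqrt ((norm (qone - qmult z z))^2) = norm (qone - qmult z z)" by simp
    finally show ?thesis .
  qed
  then have "ln (norm (qmult x x - qmult (qmult x z) (qmult x z))) = ln (norm (qone - z)) + ln (norm (qone + z)) + ln (Q2 x z) / 2"
    using p1 p2 Q by (simp add: n12 ln_mult ln_sqrt)
  moreover have "ln (4::real) = ln 2 + ln 2"
    using ln_mult[of 2 2] by simp
  ultimately show ?thesis by simp
qed


lemma S3_mone: "- qone \<in> S3" by (simp add: S3_def norm_qone)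
lemma qmult_mone: "qmult (- qone) z = - z" by (rule quat_eqI) simp_all
lemma V_ge_s: "s z \<le> V z" by (simp add: s_def V_def)

lemma ln4: "ln (4::real) = 2 * ln 2" using ln_mult[of 2 2] by simp

lemma Gp_nonneg: "norm z = 1 \<Longrightarrow> 0 \<le> ln 2 - ln (norm (qone + z))"
  using G_nonneg[of "- z"] by simp

lemma ennreal_split3:
  fixes a b c :: real
  assumes "0 \<le> a" "0 \<le> b" "0 \<le> c"
  shows "ennreal (a + b + (1/2) * c) = ennreal a + ennreal b + ennreal (1/2) * ennreal c"
proof -
  have "ennreal (a + b + (1/2) * c) = ennreal (a + b) + ennreal ((1/2) * c)"
    by (rule ennreal_plus) (use assms in auto)
  also have "ennreal (a + b) = ennreal a + ennreal b" by (rule ennreal_plus) (use assms in auto)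
  also have "ennreal ((1/2) * c) = ennreal (1/2) * ennreal c" by (rule ennreal_mult) (use assms in auto)
  finally show ?thesis .
qed

context haar3 begin

lemma E_G2: "(\<integral>\<^sup>+ z. ennreal (ln 2 - ln (norm (qone + z))) \<partial>\<nu>) = ennreal (ln 2 - 1/4)"
proof -
  have "(\<integral>\<^sup>+ z. ennreal (ln 2 - ln (norm (qone + z))) \<partial>\<nu>) = (\<integral>\<^sup>+ z. (\<lambda>w. ennreal (ln 2 - ln (norm (qone - w)))) (qmult (- qone) z) \<partial>\<nu>)"
    by (simp add: qmult_mone)
  also have "\<dots> = (\<integral>\<^sup>+ z. ennreal (ln 2 - ln (norm (qone - z))) \<partial>\<nu>)"
    by (rule linv_nn[OF S3_mone]) measurable
  also have "\<dots> = ennreal (ln 2 - 1/4)" by (rule E_G1)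
  finally show ?thesis .
qed

end

context
  fixes \<mu> :: "(quat \<times> quat) measure"
  assumes H: "is_haar_qtorus2 \<mu>"
begin

lemma main_nn:
  "(\<integral>\<^sup>+ p. ennreal (ln 4 - ln (norm (qmult (fst p) (fst p) - qmult (snd p) (snd p)))) \<partial>\<mu>) = ennreal (ln 4)"
proof -
  interpret M1: haar3 "mu1 \<mu>" by (rule haar_mu1[OF H])
  interpret M2: haar3 "mu2 \<mu>" by (rule haar_mu2[OF H])
  define HH where "HH x y = ennreal (ln 4 - ln (norm (qmult x x - qmult y y)))" for x y
  have HHm[measurable]: "(\<lambda>p. HH (fst p) (snd p)) \<in> borel_measurable borel" unfolding HH_def by measurable
  define A where "A z = ennreal (ln 2 - ln (norm (qone - z)))" for z
  define B where "B z = ennreal (ln 2 - ln (norm (qone + z)))" for z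
  have "(\<integral>\<^sup>+ p. ennreal (ln 4 - ln (norm (qmult (fst p) (fst p) - qmult (snd p) (snd p)))) \<partial>\<mu>)
      = (\<integral>\<^sup>+ p. HH (fst p) (snd p) \<partial>\<mu>)" by (simp add: HH_def)
  also have "\<dots> = (\<integral>\<^sup>+ x. (\<integral>\<^sup>+ y. HH x y \<partial>mu2 \<mu>) \<partial>mu1 \<mu>)"
    using mu_product[OF H HHm] by simp
  also have "\<dots> = (\<integral>\<^sup>+ x. (\<integral>\<^sup>+ z. HH x (qmult x z) \<partial>mu2 \<mu>) \<partial>mu1 \<mu>)"
  proof (rule nn_integral_cong)
    fix x assume "x \<in> space (mu1 \<mu>)"
    then have xS: "x \<in> S3" by (simp add: M1.space_eq)
    show "(\<integral>\<^sup>+ y. HH x y \<partial>mu2 \<mu>) = (\<integral>\<^sup>+ z. HH x (qmult x z) \<partial>mu2 \<mu>)"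
      by (rule M2.linv_nn[OF xS, symmetric]) (unfold HH_def, measurable)
  qed
  also have "\<dots> = (\<integral>\<^sup>+ z. (\<integral>\<^sup>+ x. HH x (qmult x z) \<partial>mu1 \<mu>) \<partial>mu2 \<mu>)"
    by (rule tonelli_swap[OF M1.sf M2.sf]) (unfold HH_def, measurable)
  also have "\<dots> = (\<integral>\<^sup>+ z. A z + B z + ennreal (1/2) \<partial>mu2 \<mu>)"
  proof (rule nn_integral_cong_AE)
    show "AE z in mu2 \<mu>. (\<integral>\<^sup>+ x. HH x (qmult x z) \<partial>mu1 \<mu>) = A z + B z + ennreal (1/2)"
      using M2.AE_s_pos AE_space
    proof eventually_elim
      case (elim z)
      then have zn: "norm z = 1" and V: "V z > 0" using M2.S3_norm V_ge_s[of z] by auto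
      have "(\<integral>\<^sup>+ x. HH x (qmult x z) \<partial>mu1 \<mu>) = (\<integral>\<^sup>+ x. A z + B z + ennreal (1/2) * ennreal (- ln (Q2 x z)) \<partial>mu1 \<mu>)"
      proof (rule nn_integral_cong_AE)
        show "AE x in mu1 \<mu>. HH x (qmult x z) = A z + B z + ennreal (1/2) * ennreal (- ln (Q2 x z))"
          using M1.AE_Q2_pos[OF V] AE_space
        proof eventually_elim
          case (elim x)
          then have xn: "norm x = 1" and Q: "Q2 x z > 0" using M1.S3_norm by auto
          have q1: "- ln (Q2 x z) \<ge> 0" using Q Q2_le1[OF xn V] by simp
          show ?case
            unfolding HH_def A_def B_def log_split[OF xn zn V Q]
            by (rule ennreal_split3[OF G_nonneg[OF zn] Gp_nonneg[OF zn] q1])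
        qed
      qed
      also have "\<dots> = A z + B z + ennreal (1/2) * (\<integral>\<^sup>+ x. ennreal (- ln (Q2 x z)) \<partial>mu1 \<mu>)"
      proof -
        have Qm[measurable]: "(\<lambda>x. Q2 x z) \<in> borel_measurable borel" unfolding Q2_def PV_def by measurable
        have "(\<integral>\<^sup>+ x. (A z + B z) + ennreal (1/2) * ennreal (- ln (Q2 x z)) \<partial>mu1 \<mu>)
            = (\<integral>\<^sup>+ x. (A z + B z) \<partial>mu1 \<mu>) + (\<integral>\<^sup>+ x. ennreal (1/2) * ennreal (- ln (Q2 x z)) \<partial>mu1 \<mu>)"
          by (rule nn_integral_add) measurable
        also have "(\<integral>\<^sup>+ x. ennreal (1/2) * ennreal (- ln (Q2 x z)) \<partial>mu1 \<mu>) = ennreal (1/2) * (\<integral>\<^sup>+ x. ennreal (- ln (Q2 x z)) \<partial>mu1 \<mu>)"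
          by (rule nn_integral_cmult) measurable
        also have "(\<integral>\<^sup>+ x. (A z + B z) \<partial>mu1 \<mu>) = A z + B z" by (simp add: M1.emeasure_space_1)
        finally show ?thesis by (simp add: add.assoc)
      qed
      also have "(\<integral>\<^sup>+ x. ennreal (- ln (Q2 x z)) \<partial>mu1 \<mu>) = 1" by (rule M1.E_Q2[OF V])
      finally show ?case by simp
    qed
  qed
  also have "\<dots> = (\<integral>\<^sup>+ z. A z \<partial>mu2 \<mu>) + (\<integral>\<^sup>+ z. B z \<partial>mu2 \<mu>) + ennreal (1/2)"
    by (simp add: nn_integral_add A_def B_def M2.emeasure_space_1)
  also have "\<dots> = ennreal (ln 2 - 1/4) + ennreal (ln 2 - 1/4) + ennreal (1/2)"
    unfolding A_def B_def by (simp add: M2.E_G1 M2.E_G2)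
  also have "\<dots> = ennreal ((ln 2 - 1/4) + (ln 2 - 1/4) + 1/2)"
  proof -
    have p: "0 \<le> ln (2::real) - 1/4" using ln2_ge_two_thirds by simp
    have "ennreal ((ln 2 - 1/4) + (ln 2 - 1/4) + 1/2) = ennreal ((ln 2 - 1/4) + (ln 2 - 1/4)) + ennreal (1/2)"
      by (rule ennreal_plus) (use p in auto)
    also have "ennreal ((ln 2 - 1/4) + (ln 2 - 1/4)) = ennreal (ln 2 - 1/4) + ennreal (ln 2 - 1/4)"
      by (rule ennreal_plus[OF p p])
    finally show ?thesis by simp
  qed
  also have "(ln 2 - 1/4) + (ln 2 - 1/4) + 1/2 = ln (4::real)" by (simp add: ln4)
  finally show ?thesis .
qed

end

lemma L_le: "norm x = 1 \<Longrightarrow> norm y = 1 \<Longrightarrow> ln (norm (qmult x x - qmult y y)) \<le> ln 4"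
proof -
  assume x: "norm x = 1" and y: "norm y = 1"
  have "norm (qmult x x - qmult y y) \<le> norm (qmult x x) + norm (qmult y y)" by (rule norm_triangle_ineq4)
  also have "\<dots> = 2" using x y by (simp add: norm_qmult)
  finally have le: "norm (qmult x x - qmult y y) \<le> 4" by simp
  show ?thesis
  proof (cases "norm (qmult x x - qmult y y) = 0")
    case True then show ?thesis by simp
  next
    case False
    then show ?thesis using le by (subst ln_le_cancel_iff) auto
  qed
qed

theorem theorem7p2:
  assumes "is_haar_qtorus2 \<mu>"
  shows "integrable \<mu> (\<lambda>z. ln (norm (qmult (fst z) (fst z) - qmult (snd z) (snd z)))) \<and>
         mahler_H \<mu> (\<lambda>x y. qmult x x - qmult y y) = 0"
proof -
  note H = assms
  interpret prob_space \<mu> by (rule mu_prob[OF H])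
  define L where "L z = ln (norm (qmult (fst z) (fst z) - qmult (snd z) (snd z)))" for z
  have Lb[measurable]: "L \<in> borel_measurable borel" unfolding L_def by measurable
  have Lm: "L \<in> borel_measurable \<mu>" by (rule measurable_compose[OF mu_ident[OF H] Lb])
  have Dm: "(\<lambda>z. ln 4 - L z) \<in> borel_measurable \<mu>" using Lm by measurable
  have nn: "AE z in \<mu>. 0 \<le> ln 4 - L z"
  proof (rule AE_I2)
    fix z assume "z \<in> space \<mu>"
    then have "norm (fst z) = 1" "norm (snd z) = 1" by (auto simp: mu_space[OF H] S3_def)
    then show "0 \<le> ln 4 - L z" unfolding L_def using L_le by simp
  qed
  have "(\<integral>\<^sup>+ z. ennreal (ln 4 - L z) \<partial>\<mu>) = ennreal (ln 4)"
    unfolding L_def by (rule main_nn[OF H])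
  then have "integrable \<mu> (\<lambda>z. ln 4 - L z) \<and> (\<integral>z. ln 4 - L z \<partial>\<mu>) = ln 4"
    by (subst (asm) nn_integral_eq_integrable[OF Dm nn]) simp_all
  then have i: "integrable \<mu> (\<lambda>z. ln 4 - L z)" and v: "(\<integral>z. ln 4 - L z \<partial>\<mu>) = ln 4" by auto
  have iL: "integrable \<mu> L"
  proof -
    have "integrable \<mu> (\<lambda>z. ln 4 - (ln 4 - L z))" by (intro Bochner_Integration.integrable_diff i) simp
    then show ?thesis by simp
  qed
  have "(\<integral>z. L z \<partial>\<mu>) = (\<integral>z. ln 4 - (ln 4 - L z) \<partial>\<mu>)" by simp
  also have "\<dots> = ln 4 - (\<integral>z. ln 4 - L z \<partial>\<mu>)"
    using i by (subst Bochner_Integration.integral_diff) (simp_all add: prob_space)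
  also have "\<dots> = 0" using v by simp
  finally have "(\<integral>z. L z \<partial>\<mu>) = 0" .
  then show ?thesis using iL unfolding mahler_H_def L_def by simp
qed


end
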